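(* Let $\lambda_1,\lambda_2>0$, $H=x^{1/\lambda_1}y^{1/\lambda_2}$ on the bidisc $\{|x|,|y|\le1\}\subset\mathbb{C}^2$, $0<h<1$, $U_s=\{|H|<h\}\cap\{|x|,|y|\le1\}$, and let $v=(v_1,v_I)$ be a pair of smooth real vector fields on $U_s$ with $d(\log H)(v_1)=1$, $d(\log H)(v_I)=i$, such that the negative flow of $v_1$ and the flow of $v_I$ do not increase $|x|,|y|$, and $v_1,v_I$ are tangent to $\{y=\mathrm{const}\}$ near $(0,1)$ and to $\{x=\mathrm{const}\}$ near $(1,0)$. Let $\gamma\subset\{|x|,|y|\le1\}\cap\{H=h_0\}$ be a real curve, where $h_0\in\mathbb{R}$, $0<h_0<h$. Then for any smooth curve $\varrho:[0,1]\to\{0<|z|\le|h_0|\}$ with $\varrho(0)=h_0$ and $\frac{d}{dt}|\varrho(t)|<0$ for all $t$, the transport of $\gamma$ along $\varrho$ remains in $U_s$. Moreover, if $\gamma$ intersects the transversal $\{x=1\}$ then its transport intersects $\{x=1\}$ for all $t$ (and similarly for $\{y=1\}$).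
   Context: Lifting/transport: for a smooth curve $\varrho(t)$ in $\mathbb{C}^*$ and a point $a$ with $H(a)=\varrho(0)$, the lifting of $\varrho$ through $a$ is the trajectory starting at $a$ of the time-dependent real vector field $\mathrm{Re}(\varrho(t)^{-1}\varrho'(t))\,v_1+\mathrm{Im}(\varrho(t)^{-1}\varrho'(t))\,v_I$; it satisfies $H(\tilde\varrho_a(t))=\varrho(t)$. The transport of $\gamma$ along $\varrho$ is the union over $a\in\gamma$ of the liftings of $\varrho$ through $a$. *)

theory Defs
  imports "HOL-Analysis.Analysis"
begin

text \<open>Points of C^2 are pairs (x, y) :: complex \<times> complex; real vector fields on C^2 = R^4
  are maps complex \<times> complex \<Rightarrow> complex \<times> complex.\<close>

definition bidisc :: "(complex \<times> complex) set" where
  "bidisc = {p. cmod (fst p) \<le> 1 \<and> cmod (snd p) \<le> 1}"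

text \<open>|H| = |x|^(1/l1) |y|^(1/l2) (branch independent).\<close>
definition absH :: "real \<Rightarrow> real \<Rightarrow> complex \<times> complex \<Rightarrow> real" where
  "absH l1 l2 p = cmod (fst p) powr (1 / l1) * cmod (snd p) powr (1 / l2)"

definition Us :: "real \<Rightarrow> real \<Rightarrow> real \<Rightarrow> (complex \<times> complex) set" where
  "Us l1 l2 h = {p \<in> bidisc. absH l1 l2 p < h}"

definition dlogH :: "real \<Rightarrow> real \<Rightarrow> complex \<times> complex \<Rightarrow> complex \<times> complex \<Rightarrow> complex" where
  "dlogH l1 l2 p w = fst w / (of_real l1 * fst p) + snd w / (of_real l2 * snd p)"

text \<open>Level set {H = c} of the multivalued H = x^(1/l1) y^(1/l2): some branch takes value c.\<close>
definition H_level :: "real \<Rightarrow> real \<Rightarrow> complex \<Rightarrow> (complex \<times> complex) set" where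
  "H_level l1 l2 c = {p. \<exists>lx ly. exp lx = fst p \<and> exp ly = snd p \<and>
                          exp (lx / of_real l1 + ly / of_real l2) = c}"

inductive_set higher_derivs :: "('a::real_normed_vector \<Rightarrow> 'b::real_normed_vector) \<Rightarrow> ('a \<Rightarrow> 'b) set"
  for f where
  base: "f \<in> higher_derivs f"
| step: "g \<in> higher_derivs f \<Longrightarrow> (\<lambda>x. frechet_derivative g (at x) u) \<in> higher_derivs f"

definition Cinf_on :: "'a::real_normed_vector set \<Rightarrow> ('a \<Rightarrow> 'b::real_normed_vector) \<Rightarrow> bool" where
  "Cinf_on S f \<longleftrightarrow> open S \<and> (\<forall>g\<in>higher_derivs f. g differentiable_on S)"

definition lifting_field ::
  "(real \<Rightarrow> complex) \<Rightarrow> (complex \<times> complex \<Rightarrow> complex \<times> complex) \<Rightarrow>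
   (complex \<times> complex \<Rightarrow> complex \<times> complex) \<Rightarrow> real \<Rightarrow> complex \<times> complex \<Rightarrow> complex \<times> complex" where
  "lifting_field \<rho> v1 vI t p =
     (let q = vector_derivative \<rho> (at t) / \<rho> t in Re q *\<^sub>R v1 p + Im q *\<^sub>R vI p)"

definition is_lifting ::
  "(real \<Rightarrow> complex) \<Rightarrow> (complex \<times> complex \<Rightarrow> complex \<times> complex) \<Rightarrow>
   (complex \<times> complex \<Rightarrow> complex \<times> complex) \<Rightarrow> (complex \<times> complex) set \<Rightarrow>
   complex \<times> complex \<Rightarrow> (real \<Rightarrow> complex \<times> complex) \<Rightarrow> bool" where
  "is_lifting \<rho> v1 vI W a c \<longleftrightarrow> c 0 = a \<and>
     (\<forall>t\<in>{0..1}. c t \<in> W \<and>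
        (c has_vector_derivative lifting_field \<rho> v1 vI t (c t)) (at t within {0..1}))"

end

theory Submission
  imports Defs
begin

lemma picard:
  fixes F :: "real \<Rightarrow> 'a::banach \<Rightarrow> 'a" and pa :: 'a
  assumes t01: "ta < tb" and r: "0 < r" and M: "0 \<le> M" and L: "0 \<le> L"
  and contF: "\<And>u. continuous_on {ta..tb} u \<Longrightarrow> u ` {ta..tb} \<subseteq> cball pa r \<Longrightarrow>
                 continuous_on {ta..tb} (\<lambda>s. F s (u s))"
  and bnd: "\<And>t p. t \<in> {ta..tb} \<Longrightarrow> p \<in> cball pa r \<Longrightarrow> norm (F t p) \<le> M"
  and lip: "\<And>t p q. t \<in> {ta..tb} \<Longrightarrow> p \<in> cball pa r \<Longrightarrow> q \<in> cball pa r \<Longrightarrow>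
               norm (F t p - F t q) \<le> L * norm (p - q)"
  and dM: "(tb - ta) * M \<le> r" and dL: "(tb - ta) * L \<le> 1/2"
  shows "\<exists>c. c ta = pa \<and> (\<forall>t\<in>{ta..tb}. c t \<in> cball pa r \<and>
            (c has_vector_derivative F t (c t)) (at t within {ta..tb}))"
proof -
  define cl where "cl t = max ta (min t tb)" for t
  have cl_in: "cl t \<in> {ta..tb}" for t using t01 by (auto simp: cl_def)
  have cl_id: "t \<in> {ta..tb} \<Longrightarrow> cl t = t" for t by (auto simp: cl_def)
  have cl_cont: "continuous_on UNIV cl" unfolding cl_def by (intro continuous_intros)
  define S :: "(real \<Rightarrow>\<^sub>C 'a) set" where "S = PiC UNIV (\<lambda>_. cball pa r)"
  have S_iff: "u \<in> S \<longleftrightarrow> (\<forall>t. apply_bcontfun u t \<in> cball pa r)" for u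
    by (simp add: S_def mem_PiC_iff Pi_iff)
  have "closed S" unfolding S_def by (rule closed_PiC) auto
  hence cS: "complete S" by (simp add: complete_eq_closed)
  have "const_bcontfun pa \<in> S" using r by (simp add: S_iff const_bcontfun.rep_eq)
  hence neS: "S \<noteq> {}" by auto
  define J where "J u t = pa + integral {ta..cl t} (\<lambda>s. F s (apply_bcontfun u s))" for u t
  have gcont: "continuous_on {ta..tb} (\<lambda>s. F s (apply_bcontfun u s))" if "u \<in> S" for u
    using that by (intro contF) (auto simp: S_iff)
  have Jcont: "continuous_on UNIV (J u)" if "u \<in> S" for u
  proof -
    have "continuous_on {ta..tb} (\<lambda>x. integral {ta..x} (\<lambda>s. F s (apply_bcontfun u s)))"
      by (rule indefinite_integral_continuous_1) (rule integrable_continuous_real[OF gcont[OF that]])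
    hence "continuous_on UNIV (\<lambda>t. integral {ta..cl t} (\<lambda>s. F s (apply_bcontfun u s)))"
      by (rule continuous_on_compose2[OF _ cl_cont]) (use cl_in in auto)
    thus ?thesis unfolding J_def by (intro continuous_intros)
  qed
  have Jbnd: "norm (integral {ta..cl t} (\<lambda>s. F s (apply_bcontfun u s))) \<le> M * (cl t - ta)"
    if "u \<in> S" for u t
  proof (rule integral_bound)
    show "ta \<le> cl t" using cl_in by auto
    show "continuous_on {ta..cl t} (\<lambda>s. F s (apply_bcontfun u s))"
      by (rule continuous_on_subset[OF gcont[OF that]]) (use cl_in in auto)
    fix s assume "s \<in> {ta..cl t}"
    thus "norm (F s (apply_bcontfun u s)) \<le> M"
      using cl_in[of t] that by (intro bnd) (auto simp: S_iff)
  qed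
  have Jball: "J u t \<in> cball pa r" if "u \<in> S" for u t
  proof -
    have "M * (cl t - ta) \<le> M * (tb - ta)" using cl_in[of t] M by (intro mult_left_mono) auto
    thus ?thesis using Jbnd[OF that, of t] dM by (auto simp: J_def dist_norm mult.commute)
  qed
  have Jbc: "J u \<in> bcontfun" if "u \<in> S" for u
    unfolding bcontfun_def using Jcont[OF that] Jball[OF that]
    by (auto intro!: bounded_subset[OF bounded_cball[of pa r]])
  define P where "P u = Bcontfun (J u)" for u
  have Papp: "u \<in> S \<Longrightarrow> apply_bcontfun (P u) = J u" for u
    unfolding P_def using Jbc by (simp add: Bcontfun_inverse)
  have PS: "P ` S \<subseteq> S" using Papp Jball by (auto simp: S_iff)
  have contr: "dist (P u) (P v) \<le> (1/2) * dist u v" if "u \<in> S" "v \<in> S" for u v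
  proof (rule dist_bound)
    fix t
    have "dist (apply_bcontfun (P u) t) (apply_bcontfun (P v) t)
        = norm (integral {ta..cl t} (\<lambda>s. F s (apply_bcontfun u s) - F s (apply_bcontfun v s)))"
      using that cl_in[of t]
      by (simp add: Papp J_def dist_norm integral_diff integrable_continuous_real
          continuous_on_subset[OF gcont])
    also have "\<dots> \<le> (L * dist u v) * (cl t - ta)"
    proof (rule integral_bound)
      show "ta \<le> cl t" using cl_in by auto
      show "continuous_on {ta..cl t} (\<lambda>s. F s (apply_bcontfun u s) - F s (apply_bcontfun v s))"
        using that cl_in[of t] by (intro continuous_intros continuous_on_subset[OF gcont]) auto
      fix s assume s: "s \<in> {ta..cl t}"
      have "norm (F s (apply_bcontfun u s) - F s (apply_bcontfun v s))
           \<le> L * norm (apply_bcontfun u s - apply_bcontfun v s)"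
        using that s cl_in[of t] by (intro lip) (auto simp: S_iff)
      also have "\<dots> \<le> L * dist u v"
        using dist_bounded[of u s v] L by (intro mult_left_mono) (auto simp: dist_norm)
      finally show "norm (F s (apply_bcontfun u s) - F s (apply_bcontfun v s)) \<le> L * dist u v" .
    qed
    also have "\<dots> \<le> (L * dist u v) * (tb - ta)"
      using cl_in[of t] L by (intro mult_left_mono) auto
    also have "\<dots> \<le> (1/2) * dist u v"
      using mult_right_mono[OF dL zero_le_dist[of u v]] by (simp add: algebra_simps)
    finally show "dist (apply_bcontfun (P u) t) (apply_bcontfun (P v) t) \<le> (1/2) * dist u v" .
  qed
  obtain u where uS: "u \<in> S" and fx: "P u = u"
    using Banach_fix[OF cS neS _ _ PS contr] by auto
  define c where "c = apply_bcontfun u"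
  have cJ: "c t = J u t" for t unfolding c_def using Papp[OF uS] fx by metis
  show ?thesis
  proof (intro exI conjI ballI)
    show "c ta = pa" using t01 by (simp add: cJ J_def cl_def)
  next
    fix t assume t: "t \<in> {ta..tb}"
    show "c t \<in> cball pa r" using uS by (simp add: c_def S_iff)
    have "((\<lambda>t. pa + integral {ta..t} (\<lambda>s. F s (c s))) has_vector_derivative
            (0 + F t (c t))) (at t within {ta..tb})"
      unfolding c_def by (intro derivative_intros integral_has_vector_derivative gcont uS t)
    hence D: "((\<lambda>t. pa + integral {ta..t} (\<lambda>s. F s (c s))) has_vector_derivative
            (F t (c t))) (at t within {ta..tb})" by simp
    show "(c has_vector_derivative F t (c t)) (at t within {ta..tb})"
    proof (rule has_vector_derivative_transform[OF t _ D])
      fix x assume "x \<in> {ta..tb}"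
      hence "cl x = x" by (rule cl_id)
      hence "J u x = pa + integral {ta..x} (\<lambda>s. F s (c s))" by (simp add: J_def c_def)
      thus "c x = pa + integral {ta..x} (\<lambda>s. F s (c s))" using cJ[of x] by simp
    qed
  qed
qed

lemma Cinf_diff: "Cinf_on W f \<Longrightarrow> f differentiable_on W"
  unfolding Cinf_on_def using higher_derivs.base by blast

lemma Cinf_cont: "Cinf_on W f \<Longrightarrow> continuous_on W f"
  by (rule differentiable_imp_continuous_on[OF Cinf_diff])

lemma Cinf_has_deriv:
  assumes "Cinf_on W f" "x \<in> W"
  shows "(f has_derivative frechet_derivative f (at x)) (at x)"
proof -
  have "open W" using assms(1) by (simp add: Cinf_on_def)
  hence "f differentiable at x" using Cinf_diff[OF assms(1)] assms(2)
    by (simp add: differentiable_on_eq_differentiable_at)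
  thus ?thesis by (simp add: frechet_derivative_works)
qed

lemma Cinf_Dcont: "Cinf_on W f \<Longrightarrow> continuous_on W (\<lambda>x. frechet_derivative f (at x) u)"
  unfolding Cinf_on_def
  by (metis differentiable_imp_continuous_on higher_derivs.base higher_derivs.step)

lemma onorm_le_sum_Basis:
  fixes D :: "'a::euclidean_space \<Rightarrow> 'b::real_normed_vector"
  assumes "bounded_linear D"
  shows "onorm D \<le> (\<Sum>b\<in>Basis. norm (D b))"
proof (rule onorm_le)
  fix x :: 'a
  interpret D: bounded_linear D by fact
  have "D x = D (\<Sum>b\<in>Basis. (x \<bullet> b) *\<^sub>R b)" by (simp add: euclidean_representation)
  also have "\<dots> = (\<Sum>b\<in>Basis. (x \<bullet> b) *\<^sub>R D b)" by (simp add: D.sum D.scale)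
  finally have "norm (D x) \<le> (\<Sum>b\<in>Basis. norm ((x \<bullet> b) *\<^sub>R D b))"
    by (metis norm_sum)
  also have "\<dots> \<le> (\<Sum>b\<in>Basis. norm x * norm (D b))"
    by (intro sum_mono) (auto intro: mult_right_mono Basis_le_norm)
  finally show "norm (D x) \<le> (\<Sum>b\<in>Basis. norm (D b)) * norm x"
    by (simp add: sum_distrib_left mult.commute)
qed

lemma cont_bound_compact:
  fixes g :: "'a::metric_space \<Rightarrow> 'b::real_normed_vector"
  assumes "continuous_on C g" "compact C"
  shows "\<exists>M\<ge>0. \<forall>p\<in>C. norm (g p) \<le> M"
proof -
  have "bounded (g ` C)" by (intro compact_imp_bounded compact_continuous_image assms)
  then obtain M where "M > 0" "\<forall>y\<in>g ` C. norm y \<le> M" by (auto simp: bounded_pos)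
  thus ?thesis by (intro exI[of _ M]) auto
qed

lemma Cinf_bound:
  fixes f :: "'a::euclidean_space \<Rightarrow> 'b::real_normed_vector"
  assumes "Cinf_on W f" "compact C" "C \<subseteq> W"
  shows "\<exists>M\<ge>0. \<forall>p\<in>C. norm (f p) \<le> M"
  using cont_bound_compact[OF continuous_on_subset[OF Cinf_cont[OF assms(1)] assms(3)] assms(2)] .

lemma Cinf_lip:
  fixes f :: "'a::euclidean_space \<Rightarrow> 'b::real_normed_vector"
  assumes f: "Cinf_on W f" and C: "compact C" "C \<subseteq> W"
  shows "\<exists>B\<ge>0. \<forall>S. convex S \<longrightarrow> S \<subseteq> C \<longrightarrow>
           (\<forall>p\<in>S. \<forall>q\<in>S. norm (f p - f q) \<le> B * norm (p - q))"
proof -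
  have "continuous_on C (\<lambda>x. \<Sum>b\<in>Basis. norm (frechet_derivative f (at x) b))"
    by (intro continuous_intros continuous_on_subset[OF Cinf_Dcont[OF f]] C)
  then obtain B where B: "B \<ge> 0" "\<forall>p\<in>C. norm (\<Sum>b\<in>Basis. norm (frechet_derivative f (at p) b)) \<le> B"
    using cont_bound_compact C by blast
  show ?thesis
  proof (intro exI[of _ B] conjI allI impI ballI)
    fix S p q assume S: "convex S" "S \<subseteq> C" and pq: "p \<in> S" "q \<in> S"
    have "norm (f p - f q) \<le> B * norm (p - q)"
    proof (rule differentiable_bound[OF S(1) _ _ pq])
      fix x assume x: "x \<in> S"
      hence xW: "x \<in> W" using S C by auto
      show "(f has_derivative frechet_derivative f (at x)) (at x within S)"
        by (rule has_derivative_at_withinI[OF Cinf_has_deriv[OF f xW]])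
      have bl: "bounded_linear (frechet_derivative f (at x))"
        using Cinf_has_deriv[OF f xW] by (rule has_derivative_bounded_linear)
      have "onorm (frechet_derivative f (at x)) \<le> (\<Sum>b\<in>Basis. norm (frechet_derivative f (at x) b))"
        by (rule onorm_le_sum_Basis[OF bl])
      also have "\<dots> \<le> B" using B(2) x S by force
      finally show "onorm (frechet_derivative f (at x)) \<le> B" .
    qed
    thus "norm (f p - f q) \<le> B * norm (p - q)" .
  qed (fact B)
qed

lemma local_curve:
  fixes v :: "'a::euclidean_space \<Rightarrow> 'a"
  assumes v: "Cinf_on W v" and Ov: "open Ov" "Ov \<subseteq> W" "p \<in> Ov"
  shows "\<exists>\<delta>>0. \<exists>c. c 0 = p \<and> (\<forall>t\<in>{0..\<delta>}. c t \<in> Ov \<and>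
            (c has_vector_derivative v (c t)) (at t within {0..\<delta>}))"
proof -
  obtain r where r: "r > 0" "cball p r \<subseteq> Ov" using Ov open_contains_cball by blast
  have cW: "cball p r \<subseteq> W" using r Ov by auto
  obtain M where M: "M \<ge> 0" "\<forall>q\<in>cball p r. norm (v q) \<le> M"
    using Cinf_bound[OF v compact_cball cW] by blast
  obtain B where B: "B \<ge> 0" "\<forall>S. convex S \<longrightarrow> S \<subseteq> cball p r \<longrightarrow>
           (\<forall>p\<in>S. \<forall>q\<in>S. norm (v p - v q) \<le> B * norm (p - q))"
    using Cinf_lip[OF v compact_cball cW] by blast
  define \<delta> where "\<delta> = min (r / (M + 1)) (1 / (2 * (B + 1)))"
  have d0: "\<delta> > 0" using r M B by (simp add: \<delta>_def)
  have dM: "(\<delta> - 0) * M \<le> r"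
  proof -
    have "\<delta> * M \<le> (r / (M + 1)) * M" using M d0 by (intro mult_right_mono) (auto simp: \<delta>_def)
    also have "\<dots> \<le> r" using r M by (simp add: field_simps)
    finally show ?thesis by simp
  qed
  have dL: "(\<delta> - 0) * B \<le> 1/2"
  proof -
    have "\<delta> * B \<le> (1 / (2 * (B + 1))) * B" using B d0 by (intro mult_right_mono) (auto simp: \<delta>_def)
    also have "\<dots> \<le> 1/2" using B by (simp add: field_simps)
    finally show ?thesis by simp
  qed
  have vc: "continuous_on W v" by (rule Cinf_cont[OF v])
  have "\<exists>c. c 0 = p \<and> (\<forall>t\<in>{0..\<delta>}. c t \<in> cball p r \<and>
            (c has_vector_derivative v (c t)) (at t within {0..\<delta>}))"
  proof (rule picard[where F="\<lambda>t q. v q" and pa=p and ta=0 and tb=\<delta> and r=r and M=M and L=B])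
    fix u assume "continuous_on {0..\<delta>} u" "u ` {0..\<delta>} \<subseteq> cball p r"
    thus "continuous_on {0..\<delta>} (\<lambda>s. v (u s))"
      using cW by (intro continuous_on_compose2[OF vc]) auto
  next
    fix t q q' assume "q \<in> cball p r" "q' \<in> cball p r"
    thus "norm (v q - v q') \<le> B * norm (q - q')" using B(2) convex_cball by blast
  qed (use d0 r M B dM dL in auto)
  then obtain c where c: "c 0 = p" "\<forall>t\<in>{0..\<delta>}. c t \<in> cball p r \<and>
            (c has_vector_derivative v (c t)) (at t within {0..\<delta>})" by blast
  show ?thesis using c r by (intro exI[of _ \<delta>] conjI d0 exI[of _ c]) auto
qed

lemma deriv_nonneg_left:
  fixes f :: "real \<Rightarrow> real"
  assumes D: "(f has_real_derivative D) (at a within {a..b})" and ab: "a < b"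
    and le: "\<forall>t\<in>{a..b}. f a \<le> f t"
  shows "0 \<le> D"
proof -
  have "((\<lambda>y. (f y - f a) / (y - a)) \<longlongrightarrow> D) (at a within {a..b})"
    using D by (simp add: has_field_derivative_iff)
  moreover have "\<forall>\<^sub>F y in at a within {a..b}. 0 \<le> (f y - f a) / (y - a)"
    unfolding eventually_at_filter using le by (auto intro!: always_eventually divide_nonneg_nonneg)
  moreover have "at a within {a..b} \<noteq> bot" using ab by (simp add: at_within_Icc_at_right)
  ultimately show ?thesis by (intro tendsto_lowerbound[of "\<lambda>y. (f y - f a) / (y - a)" D]) auto
qed

lemma normsq_deriv:
  fixes x :: "real \<Rightarrow> complex"
  assumes "(x has_vector_derivative x') (at t within S)"
  shows "((\<lambda>t. (cmod (x t))^2) has_real_derivative 2 * Re (cnj (x t) * x')) (at t within S)"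
proof -
  have "((\<lambda>t. x t * cnj (x t)) has_vector_derivative (x t * cnj x' + x' * cnj (x t))) (at t within S)"
    using assms by (intro derivative_intros) auto
  hence "((\<lambda>t. Re (x t * cnj (x t))) has_vector_derivative Re (x t * cnj x' + x' * cnj (x t))) (at t within S)"
    by (rule bounded_linear.has_vector_derivative[OF bounded_linear_Re])
  moreover have "\<And>t. Re (x t * cnj (x t)) = (cmod (x t))^2"
    by (simp add: complex_mult_cnj cmod_def)
  moreover have "Re (x t * cnj x' + x' * cnj (x t)) = 2 * Re (cnj (x t) * x')"
    by (simp add: algebra_simps)
  moreover have "2 * (Re x' * Re (x t)) + 2 * (Im x' * Im (x t)) = 2 * (Re (x t) * Re x') + 2 * (Im (x t) * Im x')"
    by (simp add: algebra_simps)
  ultimately show ?thesis by (simp add: has_real_derivative_iff_has_vector_derivative)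
qed

lemma nonincr_from_deriv:
  fixes f :: "real \<Rightarrow> real"
  assumes "a \<le> b" and D: "\<And>s. s \<in> {a..b} \<Longrightarrow> (f has_real_derivative f' s) (at s within {a..b})"
    and nonpos: "\<And>s. s \<in> {a..b} \<Longrightarrow> f' s \<le> 0"
  shows "f b \<le> f a"
proof -
  have "(f' has_integral (f b - f a)) {a..b}"
    using assms(1) by (intro fundamental_theorem_of_calculus) (use D[unfolded has_real_derivative_iff_has_vector_derivative] in auto)
  moreover have "((\<lambda>_. 0::real) has_integral 0) {a..b}" by simp
  ultimately have "f b - f a \<le> 0" using nonpos by (rule has_integral_le)
  thus ?thesis by simp
qed

lemma const_from_deriv:
  fixes f :: "real \<Rightarrow> real"
  assumes "a \<le> b" and D: "\<And>s. s \<in> {a..b} \<Longrightarrow> (f has_real_derivative 0) (at s within {a..b})"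
  shows "f b = f a"
proof -
  have "f b \<le> f a" by (rule nonincr_from_deriv[OF assms(1) D]) auto
  moreover have "- f b \<le> - f a"
    by (rule nonincr_from_deriv[OF assms(1), of "\<lambda>s. - f s" "\<lambda>_. 0"]) (use DERIV_minus[OF D] in auto)
  ultimately show ?thesis by simp
qed

lemma vec_mvt:
  fixes f :: "real \<Rightarrow> 'b::real_normed_vector"
  assumes "a \<le> b" and D: "\<And>s. s \<in> {a..b} \<Longrightarrow> (f has_vector_derivative f' s) (at s within {a..b})"
    and B: "\<And>s. s \<in> {a..b} \<Longrightarrow> norm (f' s) \<le> B"
  shows "norm (f b - f a) \<le> B * (b - a)"
proof -
  have "norm (f b - f a) \<le> B * norm (b - a)"
  proof (rule differentiable_bound[of "{a..b}" f "\<lambda>s h. h *\<^sub>R f' s"])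
    fix x assume "x \<in> {a..b}"
    thus "(f has_derivative (\<lambda>h. h *\<^sub>R f' x)) (at x within {a..b})"
      using D has_vector_derivative_def by blast
    show "onorm (\<lambda>h. h *\<^sub>R f' x) \<le> B"
      using B[OF \<open>x \<in> {a..b}\<close>] onorm_scaleR_left[OF bounded_linear_ident, of "f' x"]
      by (simp add: onorm_id)
  qed (use assms(1) in auto)
  thus ?thesis using assms(1) by simp
qed

lemma vd_trivial:
  assumes "\<not> s islimpt S"
  shows "(f has_vector_derivative D) (at s within S)"
proof -
  have "at s within S = bot" using assms by (simp add: trivial_limit_within)
  thus ?thesis by (simp add: has_vector_derivative_def has_derivative_def bounded_linear_scaleR_left)
qed

lemma vd_Un:
  assumes "(f has_vector_derivative D) (at x within S)" "(f has_vector_derivative D) (at x within T)"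
  shows "(f has_vector_derivative D) (at x within S \<union> T)"
  using assms unfolding has_vector_derivative_def has_derivative_within
  by (auto simp: Lim_within_Un)

lemma re_div:
  fixes x w :: complex
  assumes "x \<noteq> 0" "l \<noteq> 0"
  shows "Re (w / (of_real l * x)) = Re (cnj x * w) / (l * (cmod x)^2)"
proof -
  have "w / (of_real l * x) = (cnj x * w) / of_real (l * (cmod x)^2)"
    using assms by (simp add: complex_div_cnj[of w x] field_simps complex_norm_square[symmetric])
  thus ?thesis by (simp add: Re_divide_of_real)
qed

lemma cont_open_nbhd:
  fixes c :: "real \<Rightarrow> 'b::metric_space"
  assumes "continuous (at t within S) c" "open Ov" "c t \<in> Ov"
  shows "\<exists>d>0. \<forall>s\<in>S. \<bar>s - t\<bar> < d \<longrightarrow> c s \<in> Ov"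
proof -
  obtain e where e: "e > 0" "ball (c t) e \<subseteq> Ov" using assms open_contains_ball by blast
  obtain d where d: "d > 0" "\<forall>s\<in>S. dist s t < d \<longrightarrow> dist (c s) (c t) < e"
    using assms(1) e(1) unfolding continuous_within_eps_delta by blast
  show ?thesis using d e by (intro exI[of _ d]) (auto simp: dist_real_def dist_commute subset_eq)
qed

locale setting =
  fixes l1 l2 h h0 :: real
    and v1 vI :: "complex \<times> complex \<Rightarrow> complex \<times> complex"
    and W :: "(complex \<times> complex) set"
    and g :: "real \<Rightarrow> complex \<times> complex"
    and \<rho> :: "real \<Rightarrow> complex"
    and W\<rho> :: "real set"
  assumes l1: "l1 > 0" and l2: "l2 > 0" and h: "0 < h" "h < 1"
    and oW: "open W" and UsW: "Us l1 l2 h \<subseteq> W" and s1: "Cinf_on W v1" and sI: "Cinf_on W vI"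
    and dlog: "\<forall>p\<in>Us l1 l2 h. fst p \<noteq> 0 \<and> snd p \<noteq> 0 \<longrightarrow>
           dlogH l1 l2 p (v1 p) = 1 \<and> dlogH l1 l2 p (vI p) = \<i>"
    and mono1: "\<forall>c a b. (\<forall>t\<in>{a..b}. c t \<in> Us l1 l2 h \<and>
                   (c has_vector_derivative v1 (c t)) (at t within {a..b})) \<longrightarrow>
           (\<forall>s\<in>{a..b}. \<forall>t\<in>{a..b}. s \<le> t \<longrightarrow>
              cmod (fst (c s)) \<le> cmod (fst (c t)) \<and> cmod (snd (c s)) \<le> cmod (snd (c t)))"
    and monoI: "\<forall>c a b. (\<forall>t\<in>{a..b}. c t \<in> Us l1 l2 h \<and>
                   (c has_vector_derivative vI (c t)) (at t within {a..b})) \<longrightarrow>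
           (\<forall>s\<in>{a..b}. \<forall>t\<in>{a..b}. s \<le> t \<longrightarrow>
              cmod (fst (c t)) \<le> cmod (fst (c s)) \<and> cmod (snd (c t)) \<le> cmod (snd (c s)))"
    and epsy: "\<exists>\<epsilon>>0. \<forall>p\<in>Us l1 l2 h. cmod (snd p) > 1 - \<epsilon> \<longrightarrow> snd (v1 p) = 0 \<and> snd (vI p) = 0"
    and epsx: "\<exists>\<epsilon>>0. \<forall>p\<in>Us l1 l2 h. cmod (fst p) > 1 - \<epsilon> \<longrightarrow> fst (v1 p) = 0 \<and> fst (vI p) = 0"
    and h0: "0 < h0" "h0 < h"
    and gpath: "path g" and gim: "path_image g \<subseteq> bidisc \<inter> H_level l1 l2 (of_real h0)"
    and oWr: "open W\<rho>" and IWr: "{0..1} \<subseteq> W\<rho>" and sr: "Cinf_on W\<rho> \<rho>"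
    and r0: "\<rho> 0 = of_real h0"
    and rnz: "\<forall>t\<in>{0..1}. \<rho> t \<noteq> 0 \<and> cmod (\<rho> t) \<le> h0"
    and rdec: "\<forall>t\<in>{0..1}. \<exists>D<0. ((\<lambda>s. cmod (\<rho> s)) has_real_derivative D) (at t)"
begin

abbreviation "U \<equiv> Us l1 l2 h"
abbreviation "aH \<equiv> absH l1 l2"

definition "rd t = vector_derivative \<rho> (at t)"
definition "al t = Re (rd t / \<rho> t)"
definition "be t = Im (rd t / \<rho> t)"
abbreviation "F \<equiv> lifting_field \<rho> v1 vI"

lemma F_eq: "F t p = al t *\<^sub>R v1 p + be t *\<^sub>R vI p"
  by (simp add: lifting_field_def al_def be_def rd_def Let_def)

lemma aH_cont: "continuous_on UNIV aH"
proof -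
  have "continuous_on UNIV (\<lambda>p::complex\<times>complex. cmod (fst p) powr (1 / l1) * cmod (snd p) powr (1 / l2))"
    using l1 l2 by (intro continuous_intros continuous_on_powr') auto
  thus ?thesis by (simp add: absH_def[abs_def])
qed

lemma aH_nonneg: "aH p \<ge> 0" by (simp add: absH_def)

lemma aH_pos_nz: "aH p > 0 \<Longrightarrow> fst p \<noteq> 0 \<and> snd p \<noteq> 0"
  by (auto simp: absH_def)

lemma bidisc_closed: "closed bidisc"
proof -
  have "bidisc = {p. cmod (fst p) \<le> 1} \<inter> {p. cmod (snd p) \<le> 1}" by (auto simp: bidisc_def)
  moreover have "closed ({p::complex\<times>complex. cmod (fst p) \<le> 1} \<inter> {p. cmod (snd p) \<le> 1})"
    by (intro closed_Int closed_Collect_le continuous_intros)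
  ultimately show ?thesis by simp
qed

lemma bidisc_bounded: "bounded bidisc"
proof -
  have "bidisc \<subseteq> cball 0 2"
  proof
    fix p :: "complex \<times> complex" assume "p \<in> bidisc"
    hence "cmod (fst p) \<le> 1" "cmod (snd p) \<le> 1" by (auto simp: bidisc_def)
    moreover have "norm p \<le> cmod (fst p) + cmod (snd p)"
      by (metis norm_Pair_le prod.collapse)
    ultimately show "p \<in> cball 0 2" by auto
  qed
  thus ?thesis using bounded_subset by blast
qed

lemma aH_level:
  assumes "p \<in> H_level l1 l2 (of_real h0)"
  shows "aH p = h0"
proof -
  obtain lx ly where e: "exp lx = fst p" "exp ly = snd p"
    "exp (lx / of_real l1 + ly / of_real l2) = of_real h0"
    using assms by (auto simp: H_level_def)
  have "cmod (exp (lx / of_real l1 + ly / of_real l2)) = h0" using e(3) h0 by simp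
  hence "exp (Re lx / l1 + Re ly / l2) = h0" by simp
  moreover have "cmod (fst p) powr (1/l1) = exp (Re lx / l1)"
    using e(1)[symmetric] by (simp add: powr_def)
  moreover have "cmod (snd p) powr (1/l2) = exp (Re ly / l2)"
    using e(2)[symmetric] by (simp add: powr_def)
  ultimately show ?thesis by (simp add: absH_def exp_add)
qed

lemma a_props:
  assumes "a \<in> path_image g"
  shows "a \<in> bidisc" "aH a = h0" "a \<in> U" "fst a \<noteq> 0" "snd a \<noteq> 0"
proof -
  show ab: "a \<in> bidisc" using assms gim by auto
  have "a \<in> H_level l1 l2 (of_real h0)" using assms gim by auto
  thus ah: "aH a = h0" by (rule aH_level)
  show "a \<in> U" using ab ah h0 by (simp add: Us_def)
  show "fst a \<noteq> 0" "snd a \<noteq> 0" using aH_pos_nz[of a] ah h0 by auto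
qed

lemma eps_x: "p \<in> U \<Longrightarrow> cmod (fst p) = 1 \<Longrightarrow> fst (v1 p) = 0 \<and> fst (vI p) = 0"
  using epsx by force

lemma eps_y: "p \<in> U \<Longrightarrow> cmod (snd p) = 1 \<Longrightarrow> snd (v1 p) = 0 \<and> snd (vI p) = 0"
  using epsy by force

lemma rho_deriv: "t \<in> W\<rho> \<Longrightarrow> (\<rho> has_vector_derivative rd t) (at t)"
  unfolding rd_def
  using Cinf_has_deriv[OF sr] by (metis differentiableI vector_derivative_works)

lemma rho_cont: "continuous_on {0..1} \<rho>"
  using continuous_on_subset[OF Cinf_cont[OF sr] IWr] .

lemma rd_cont: "continuous_on {0..1} rd"
proof -
  have "continuous_on W\<rho> (\<lambda>x. frechet_derivative \<rho> (at x) 1)" by (rule Cinf_Dcont[OF sr])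
  moreover have "frechet_derivative \<rho> (at x) 1 = rd x" if "x \<in> W\<rho>" for x
  proof -
    have "(\<rho> has_derivative (\<lambda>h. h *\<^sub>R rd x)) (at x)"
      using rho_deriv[OF that] by (simp add: has_vector_derivative_def)
    hence "frechet_derivative \<rho> (at x) = (\<lambda>h. h *\<^sub>R rd x)" by (rule frechet_derivative_at[symmetric])
    thus ?thesis by simp
  qed
  ultimately have "continuous_on W\<rho> rd" by (rule continuous_on_eq) auto
  thus ?thesis using IWr continuous_on_subset by blast
qed

lemma al_cont: "continuous_on {0..1} al" and be_cont: "continuous_on {0..1} be"
  unfolding al_def[abs_def] be_def[abs_def]
  using rnz by (auto intro!: continuous_intros rd_cont rho_cont)

lemma AB_bound: "\<exists>A\<ge>0. \<forall>t\<in>{0..1}. \<bar>al t\<bar> \<le> A \<and> \<bar>be t\<bar> \<le> A"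
proof -
  obtain A1 where A1: "A1 \<ge> 0" "\<forall>t\<in>{0..1}. norm (al t) \<le> A1"
    using cont_bound_compact[OF al_cont compact_Icc] by blast
  obtain A2 where A2: "A2 \<ge> 0" "\<forall>t\<in>{0..1}. norm (be t) \<le> A2"
    using cont_bound_compact[OF be_cont compact_Icc] by blast
  show ?thesis using A1 A2 by (intro exI[of _ "A1 + A2"]) force
qed

lemma al_nonpos: assumes "t \<in> {0..1}" shows "al t \<le> 0"
proof -
  obtain D where D: "D < 0" "((\<lambda>s. cmod (\<rho> s)) has_real_derivative D) (at t)" using rdec assms by blast
  have tW: "t \<in> W\<rho>" using assms IWr by auto
  have nz: "\<rho> t \<noteq> 0" using rnz assms by auto
  have "((\<lambda>s. (cmod (\<rho> s))^2) has_real_derivative 2 * Re (cnj (\<rho> t) * rd t)) (at t)"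
    by (rule normsq_deriv[OF rho_deriv[OF tW]])
  moreover have "((\<lambda>s. (cmod (\<rho> s))^2) has_real_derivative (2 * cmod (\<rho> t) * D)) (at t)"
    using D(2) by (auto intro!: derivative_eq_intros)
  ultimately have "2 * Re (cnj (\<rho> t) * rd t) = 2 * cmod (\<rho> t) * D"
    using DERIV_unique by fastforce
  moreover have "cmod (\<rho> t) * D < 0" using nz D(1) by (simp add: mult_pos_neg)
  ultimately have "Re (cnj (\<rho> t) * rd t) < 0" by linarith
  moreover have "al t = Re (cnj (\<rho> t) * rd t) / (1 * (cmod (\<rho> t))^2)"
    unfolding al_def using re_div[OF nz, of 1 "rd t"] by simp
  ultimately show ?thesis by (simp add: divide_nonpos_nonneg)
qed

end

lemma curve_sign_ge:
  fixes x :: "real \<Rightarrow> complex"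
  assumes "0 < \<delta>" "(x has_vector_derivative x') (at 0 within {0..\<delta>})"
    "\<forall>t\<in>{0..\<delta>}. cmod (x 0) \<le> cmod (x t)"
  shows "0 \<le> Re (cnj (x 0) * x')"
proof -
  have "((\<lambda>t. (cmod (x t))^2) has_real_derivative 2 * Re (cnj (x 0) * x')) (at 0 within {0..\<delta>})"
    by (rule normsq_deriv[OF assms(2)])
  moreover have "\<forall>t\<in>{0..\<delta>}. (cmod (x 0))^2 \<le> (cmod (x t))^2"
    using assms(3) by (auto intro: power_mono)
  ultimately have "0 \<le> 2 * Re (cnj (x 0) * x')"
    using assms(1) by (intro deriv_nonneg_left[of "\<lambda>t. (cmod (x t))^2" _ 0 \<delta>]) auto
  thus ?thesis by simp
qed

lemma curve_sign_le:
  fixes x :: "real \<Rightarrow> complex"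
  assumes "0 < \<delta>" "(x has_vector_derivative x') (at 0 within {0..\<delta>})"
    "\<forall>t\<in>{0..\<delta>}. cmod (x t) \<le> cmod (x 0)"
  shows "Re (cnj (x 0) * x') \<le> 0"
proof -
  have "((\<lambda>t. - ((cmod (x t))^2)) has_real_derivative - (2 * Re (cnj (x 0) * x'))) (at 0 within {0..\<delta>})"
    by (rule DERIV_minus[OF normsq_deriv[OF assms(2)]])
  moreover have "\<forall>t\<in>{0..\<delta>}. - ((cmod (x 0))^2) \<le> - ((cmod (x t))^2)"
    using assms(3) by (auto intro: power_mono)
  ultimately have "0 \<le> - (2 * Re (cnj (x 0) * x'))"
    using assms(1) by (intro deriv_nonneg_left[of "\<lambda>t. - ((cmod (x t))^2)" _ 0 \<delta>]) auto
  thus ?thesis by linarith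
qed

context setting begin

definition "Oin = {q. fst q \<noteq> 0 \<and> snd q \<noteq> 0 \<and> cmod (fst q) < 1 \<and> cmod (snd q) < 1 \<and> aH q < h}"

lemma Oin_open: "open Oin"
  unfolding Oin_def
  by (intro open_Collect_conj open_Collect_neq open_Collect_less continuous_intros aH_cont)

lemma Oin_U: "Oin \<subseteq> U" by (auto simp: Oin_def Us_def bidisc_def)

lemma dl_parts:
  assumes "p \<in> U" "fst p \<noteq> 0" "snd p \<noteq> 0"
  shows "fst (v1 p) / (of_real l1 * fst p) + snd (v1 p) / (of_real l2 * snd p) = 1"
    "fst (vI p) / (of_real l1 * fst p) + snd (vI p) / (of_real l2 * snd p) = \<i>"
  using dlog assms by (auto simp: dlogH_def)

lemma infin:
  assumes p: "p \<in> U" "fst p \<noteq> 0" "snd p \<noteq> 0"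
  shows "0 \<le> Re (cnj (fst p) * fst (v1 p)) \<and> 0 \<le> Re (cnj (snd p) * snd (v1 p)) \<and>
         Re (cnj (fst p) * fst (vI p)) = 0 \<and> Re (cnj (snd p) * snd (vI p)) = 0"
proof -
  note d1 = dl_parts(1)[OF p] and dI = dl_parts(2)[OF p]
  have pb: "cmod (fst p) \<le> 1" "cmod (snd p) \<le> 1" using p(1) by (auto simp: Us_def bidisc_def)
  consider "cmod (fst p) = 1" | "cmod (snd p) = 1" | "cmod (fst p) < 1" "cmod (snd p) < 1"
    using pb by linarith
  thus ?thesis
  proof cases
    case 1
    from eps_x[OF p(1) 1] have z: "fst (v1 p) = 0" "fst (vI p) = 0" by auto
    have "snd (v1 p) = of_real l2 * snd p" using d1 z p l2 by (simp add: field_simps)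
    moreover have "snd (vI p) = \<i> * of_real l2 * snd p" using dI z p l2 by (simp add: field_simps)
    moreover have "cnj (snd p) * snd p = of_real ((cmod (snd p))^2)"
      by (metis complex_norm_square mult.commute)
    ultimately show ?thesis using z l2
      by (simp add: algebra_simps)
  next
    case 2
    from eps_y[OF p(1) 2] have z: "snd (v1 p) = 0" "snd (vI p) = 0" by auto
    have "fst (v1 p) = of_real l1 * fst p" using d1 z p l1 by (simp add: field_simps)
    moreover have "fst (vI p) = \<i> * of_real l1 * fst p" using dI z p l1 by (simp add: field_simps)
    moreover have "cnj (fst p) * fst p = of_real ((cmod (fst p))^2)"
      by (metis complex_norm_square mult.commute)
    ultimately show ?thesis using z l1
      by (simp add: algebra_simps)
  next
    case 3
    have pO: "p \<in> Oin" using 3 p by (auto simp: Oin_def Us_def)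
    have OW: "Oin \<subseteq> W" using Oin_U UsW by auto
    obtain \<delta> c where c: "\<delta> > 0" "c 0 = p" "\<forall>t\<in>{0..\<delta>}. c t \<in> Oin \<and>
            (c has_vector_derivative v1 (c t)) (at t within {0..\<delta>})"
      using local_curve[OF s1 Oin_open OW pO] by blast
    have m: "\<forall>s\<in>{0..\<delta>}. \<forall>t\<in>{0..\<delta>}. s \<le> t \<longrightarrow>
              cmod (fst (c s)) \<le> cmod (fst (c t)) \<and> cmod (snd (c s)) \<le> cmod (snd (c t))"
      using mono1 c(3) Oin_U by blast
    have D0: "(c has_vector_derivative v1 p) (at 0 within {0..\<delta>})" using c by auto
    have r1: "0 \<le> Re (cnj (fst p) * fst (v1 p))"
      using curve_sign_ge[of \<delta> "\<lambda>t. fst (c t)" "fst (v1 p)"] c(1,2) m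
        bounded_linear.has_vector_derivative[OF bounded_linear_fst D0] by auto
    have r2: "0 \<le> Re (cnj (snd p) * snd (v1 p))"
      using curve_sign_ge[of \<delta> "\<lambda>t. snd (c t)" "snd (v1 p)"] c(1,2) m
        bounded_linear.has_vector_derivative[OF bounded_linear_snd D0] by auto
    obtain \<delta>' d where d: "\<delta>' > 0" "d 0 = p" "\<forall>t\<in>{0..\<delta>'}. d t \<in> Oin \<and>
            (d has_vector_derivative vI (d t)) (at t within {0..\<delta>'})"
      using local_curve[OF sI Oin_open OW pO] by blast
    have m': "\<forall>s\<in>{0..\<delta>'}. \<forall>t\<in>{0..\<delta>'}. s \<le> t \<longrightarrow>
              cmod (fst (d t)) \<le> cmod (fst (d s)) \<and> cmod (snd (d t)) \<le> cmod (snd (d s))"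
      using monoI d(3) Oin_U by blast
    have D0': "(d has_vector_derivative vI p) (at 0 within {0..\<delta>'})" using d by auto
    have r3: "Re (cnj (fst p) * fst (vI p)) \<le> 0"
      using curve_sign_le[of \<delta>' "\<lambda>t. fst (d t)" "fst (vI p)"] d(1,2) m'
        bounded_linear.has_vector_derivative[OF bounded_linear_fst D0'] by auto
    have r4: "Re (cnj (snd p) * snd (vI p)) \<le> 0"
      using curve_sign_le[of \<delta>' "\<lambda>t. snd (d t)" "snd (vI p)"] d(1,2) m'
        bounded_linear.has_vector_derivative[OF bounded_linear_snd D0'] by auto
    have "Re (fst (vI p) / (of_real l1 * fst p)) + Re (snd (vI p) / (of_real l2 * snd p)) = 0"
      using arg_cong[OF dI, of Re] by simp
    hence sum0: "Re (cnj (fst p) * fst (vI p)) / (l1 * (cmod (fst p))^2) +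
                 Re (cnj (snd p) * snd (vI p)) / (l2 * (cmod (snd p))^2) = 0"
      using re_div p l1 l2 by simp
    have q1: "Re (cnj (fst p) * fst (vI p)) / (l1 * (cmod (fst p))^2) \<le> 0"
      using r3 l1 by (simp add: divide_nonpos_nonneg)
    have q2: "Re (cnj (snd p) * snd (vI p)) / (l2 * (cmod (snd p))^2) \<le> 0"
      using r4 l2 by (simp add: divide_nonpos_nonneg)
    have "Re (cnj (fst p) * fst (vI p)) / (l1 * (cmod (fst p))^2) = 0" using sum0 q1 q2 by linarith
    hence e3: "Re (cnj (fst p) * fst (vI p)) = 0" using l1 p by simp
    have "Re (cnj (snd p) * snd (vI p)) / (l2 * (cmod (snd p))^2) = 0" using sum0 q1 q2 by linarith
    hence e4: "Re (cnj (snd p) * snd (vI p)) = 0" using l2 p by simp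
    show ?thesis using r1 r2 e3 e4 by blast
  qed
qed

end

lemma ln_deriv:
  fixes f :: "real \<Rightarrow> real"
  assumes "(f has_real_derivative f') (at t within S)" "0 < f t"
  shows "((\<lambda>t. ln (f t)) has_real_derivative f' / f t) (at t within S)"
  using assms by (auto intro!: derivative_eq_intros)

context setting begin

lemma fstF: "fst (F s p) = of_real (al s) * fst (v1 p) + of_real (be s) * fst (vI p)"
  by (simp add: F_eq scaleR_conv_of_real)
lemma sndF: "snd (F s p) = of_real (al s) * snd (v1 p) + of_real (be s) * snd (vI p)"
  by (simp add: F_eq scaleR_conv_of_real)

lemma dlogF:
  assumes "p \<in> U" "fst p \<noteq> 0" "snd p \<noteq> 0"
  shows "Re (fst (F s p) / (of_real l1 * fst p)) + Re (snd (F s p) / (of_real l2 * snd p)) = al s"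
proof -
  define u1 where "u1 = fst (v1 p) / (of_real l1 * fst p)"
  define w1 where "w1 = fst (vI p) / (of_real l1 * fst p)"
  define u2 where "u2 = snd (v1 p) / (of_real l2 * snd p)"
  define w2 where "w2 = snd (vI p) / (of_real l2 * snd p)"
  have eq1: "fst (F s p) / (of_real l1 * fst p) = of_real (al s) * u1 + of_real (be s) * w1"
    unfolding u1_def w1_def by (simp add: fstF add_divide_distrib)
  have eq2: "snd (F s p) / (of_real l2 * snd p) = of_real (al s) * u2 + of_real (be s) * w2"
    unfolding u2_def w2_def by (simp add: sndF add_divide_distrib)
  have "fst (F s p) / (of_real l1 * fst p) + snd (F s p) / (of_real l2 * snd p)
     = of_real (al s) * (fst (v1 p) / (of_real l1 * fst p) + snd (v1 p) / (of_real l2 * snd p))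
       + of_real (be s) * (fst (vI p) / (of_real l1 * fst p) + snd (vI p) / (of_real l2 * snd p))"
    unfolding eq1 eq2 u1_def[symmetric] w1_def[symmetric] u2_def[symmetric] w2_def[symmetric]
    by (simp add: algebra_simps)
  also have "\<dots> = of_real (al s) + of_real (be s) * \<i>" using dl_parts[OF assms] by simp
  finally have "Re (fst (F s p) / (of_real l1 * fst p) + snd (F s p) / (of_real l2 * snd p))
     = Re (of_real (al s) + of_real (be s) * \<i>)" by (rule arg_cong)
  thus ?thesis by simp
qed

lemma ln_aH:
  assumes "fst p \<noteq> 0" "snd p \<noteq> 0"
  shows "(1/l1) * ln ((cmod (fst p))^2) + (1/l2) * ln ((cmod (snd p))^2) = 2 * ln (aH p)"
    and "aH p > 0"
proof -
  have px: "cmod (fst p) > 0" and py: "cmod (snd p) > 0" using assms by auto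
  show "aH p > 0" using px py by (simp add: absH_def)
  have "ln (aH p) = ln (cmod (fst p) powr (1/l1)) + ln (cmod (snd p) powr (1/l2))"
    unfolding absH_def using px py by (simp add: ln_mult)
  also have "\<dots> = (1/l1) * ln (cmod (fst p)) + (1/l2) * ln (cmod (snd p))"
    using px py by (simp add: ln_powr)
  finally show "(1/l1) * ln ((cmod (fst p))^2) + (1/l2) * ln ((cmod (snd p))^2) = 2 * ln (aH p)"
    using px py by (simp add: ln_realpow algebra_simps)
qed

lemma inv_end:
  assumes a: "a \<in> path_image g" and t: "0 \<le> t" "t \<le> 1" and c0: "c 0 = a"
    and cd: "\<forall>s\<in>{0..t}. (c has_vector_derivative F s (c s)) (at s within {0..t})"
    and good: "\<forall>s\<in>{0..t}. c s \<in> U \<and> fst (c s) \<noteq> 0 \<and> snd (c s) \<noteq> 0"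
  shows "aH (c t) = cmod (\<rho> t) \<and> cmod (fst (c t)) \<le> cmod (fst a) \<and> cmod (snd (c t)) \<le> cmod (snd a)"
proof -
  have sI: "s \<in> {0..1}" if "s \<in> {0..t}" for s using that t by auto
  have dX: "((\<lambda>s. fst (c s)) has_vector_derivative fst (F s (c s))) (at s within {0..t})"
    if "s \<in> {0..t}" for s
    using bounded_linear.has_vector_derivative[OF bounded_linear_fst] cd that by blast
  have dY: "((\<lambda>s. snd (c s)) has_vector_derivative snd (F s (c s))) (at s within {0..t})"
    if "s \<in> {0..t}" for s
    using bounded_linear.has_vector_derivative[OF bounded_linear_snd] cd that by blast
  have dR: "(\<rho> has_vector_derivative rd s) (at s within {0..t})" if "s \<in> {0..t}" for s
    using rho_deriv[of s] sI[OF that] IWr has_vector_derivative_at_within by blast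
  have inf: "0 \<le> Re (cnj (fst (c s)) * fst (v1 (c s))) \<and> 0 \<le> Re (cnj (snd (c s)) * snd (v1 (c s))) \<and>
         Re (cnj (fst (c s)) * fst (vI (c s))) = 0 \<and> Re (cnj (snd (c s)) * snd (vI (c s))) = 0"
    if "s \<in> {0..t}" for s using infin good that by blast
  have mx: "(cmod (fst (c t)))^2 \<le> (cmod (fst (c 0)))^2"
  proof (rule nonincr_from_deriv[OF t(1)])
    fix s assume s: "s \<in> {0..t}"
    show "((\<lambda>s. (cmod (fst (c s)))^2) has_real_derivative 2 * Re (cnj (fst (c s)) * fst (F s (c s)))) (at s within {0..t})"
      by (rule normsq_deriv[OF dX[OF s]])
    have "Re (cnj (fst (c s)) * fst (F s (c s))) = al s * Re (cnj (fst (c s)) * fst (v1 (c s)))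
          + be s * Re (cnj (fst (c s)) * fst (vI (c s)))" by (simp add: fstF algebra_simps)
    thus "2 * Re (cnj (fst (c s)) * fst (F s (c s))) \<le> 0"
      using inf[OF s] al_nonpos[OF sI[OF s]] by (simp add: mult_nonpos_nonneg)
  qed
  have my: "(cmod (snd (c t)))^2 \<le> (cmod (snd (c 0)))^2"
  proof (rule nonincr_from_deriv[OF t(1)])
    fix s assume s: "s \<in> {0..t}"
    show "((\<lambda>s. (cmod (snd (c s)))^2) has_real_derivative 2 * Re (cnj (snd (c s)) * snd (F s (c s)))) (at s within {0..t})"
      by (rule normsq_deriv[OF dY[OF s]])
    have "Re (cnj (snd (c s)) * snd (F s (c s))) = al s * Re (cnj (snd (c s)) * snd (v1 (c s)))
          + be s * Re (cnj (snd (c s)) * snd (vI (c s)))" by (simp add: sndF algebra_simps)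
    thus "2 * Re (cnj (snd (c s)) * snd (F s (c s))) \<le> 0"
      using inf[OF s] al_nonpos[OF sI[OF s]] by (simp add: mult_nonpos_nonneg)
  qed
  \<comment> \<open>conservation of |H|\<close>
  define \<phi> where "\<phi> s = (1/l1) * ln ((cmod (fst (c s)))^2) + (1/l2) * ln ((cmod (snd (c s)))^2)
                        - ln ((cmod (\<rho> s))^2)" for s
  have "\<phi> t = \<phi> 0"
  proof (rule const_from_deriv[OF t(1)])
    fix s assume s: "s \<in> {0..t}"
    have nz: "fst (c s) \<noteq> 0" "snd (c s) \<noteq> 0" "\<rho> s \<noteq> 0" using good s rnz sI[OF s] by auto
    have "(\<phi> has_real_derivative
        (1/l1) * (2 * Re (cnj (fst (c s)) * fst (F s (c s))) / (cmod (fst (c s)))^2)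
      + (1/l2) * (2 * Re (cnj (snd (c s)) * snd (F s (c s))) / (cmod (snd (c s)))^2)
      - 2 * Re (cnj (\<rho> s) * rd s) / (cmod (\<rho> s))^2) (at s within {0..t})"
    proof -
      have p1: "0 < (cmod (fst (c s)))^2" "0 < (cmod (snd (c s)))^2" "0 < (cmod (\<rho> s))^2"
        using nz by auto
      note D1 = ln_deriv[OF normsq_deriv[OF dX[OF s]] p1(1)]
      note D2 = ln_deriv[OF normsq_deriv[OF dY[OF s]] p1(2)]
      note D3 = ln_deriv[OF normsq_deriv[OF dR[OF s]] p1(3)]
      show ?thesis unfolding \<phi>_def
        by (rule DERIV_diff[OF DERIV_add[OF DERIV_cmult[OF D1] DERIV_cmult[OF D2]] D3])
    qed
    moreover have "(1/l1) * (2 * Re (cnj (fst (c s)) * fst (F s (c s))) / (cmod (fst (c s)))^2)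
      + (1/l2) * (2 * Re (cnj (snd (c s)) * snd (F s (c s))) / (cmod (snd (c s)))^2)
      - 2 * Re (cnj (\<rho> s) * rd s) / (cmod (\<rho> s))^2 = 0"
    proof -
      define A where "A = Re (cnj (fst (c s)) * fst (F s (c s)))"
      define B where "B = Re (cnj (snd (c s)) * snd (F s (c s)))"
      define R where "R = Re (cnj (\<rho> s) * rd s)"
      define N1 where "N1 = (cmod (fst (c s)))^2"
      define N2 where "N2 = (cmod (snd (c s)))^2"
      define N3 where "N3 = (cmod (\<rho> s))^2"
      have e1: "Re (fst (F s (c s)) / (of_real l1 * fst (c s))) = A / (l1 * N1)"
        unfolding A_def N1_def by (rule re_div[OF nz(1)]) (use l1 in simp)
      have e2: "Re (snd (F s (c s)) / (of_real l2 * snd (c s))) = B / (l2 * N2)"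
        unfolding B_def N2_def by (rule re_div[OF nz(2)]) (use l2 in simp)
      have e3: "al s = R / (1 * N3)"
        unfolding al_def R_def N3_def using re_div[OF nz(3), of 1 "rd s"] by simp
      have "A / (l1 * N1) + B / (l2 * N2) = R / (1 * N3)"
        using dlogF[of "c s" s] good s e1 e2 e3 by simp
      moreover have "(1/l1) * (2 * A / N1) = 2 * (A / (l1 * N1))" by simp
      moreover have "(1/l2) * (2 * B / N2) = 2 * (B / (l2 * N2))" by simp
      moreover have "2 * R / N3 = 2 * (R / (1 * N3))" by simp
      ultimately have "(1/l1) * (2 * A / N1) + (1/l2) * (2 * B / N2) - 2 * R / N3 = 0" by linarith
      thus ?thesis unfolding A_def B_def R_def N1_def N2_def N3_def .
    qed
    ultimately show "(\<phi> has_real_derivative 0) (at s within {0..t})" by simp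
  qed
  moreover have "\<phi> s = 2 * ln (aH (c s)) - 2 * ln (cmod (\<rho> s))" if "s \<in> {0..t}" for s
  proof -
    have "\<rho> s \<noteq> 0" using rnz sI[OF that] by auto
    thus ?thesis unfolding \<phi>_def using ln_aH(1)[of "c s"] good that by (simp add: ln_realpow)
  qed
  ultimately have "ln (aH (c t)) - ln (cmod (\<rho> t)) = ln (aH (c 0)) - ln (cmod (\<rho> 0))"
    using t by auto
  moreover have "aH (c 0) = h0" using a_props[OF a] c0 by simp
  moreover have "cmod (\<rho> 0) = h0" using r0 h0 by simp
  ultimately have "ln (aH (c t)) = ln (cmod (\<rho> t))" by simp
  moreover have "aH (c t) > 0" using ln_aH(2)[of "c t"] good t by auto
  moreover have "cmod (\<rho> t) > 0" using rnz t by auto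
  ultimately have "aH (c t) = cmod (\<rho> t)" by simp
  moreover have "cmod (fst (c t)) \<le> cmod (fst a)" using power2_le_imp_le[OF mx] c0 by simp
  moreover have "cmod (snd (c t)) \<le> cmod (snd a)" using power2_le_imp_le[OF my] c0 by simp
  ultimately show ?thesis by blast
qed

lemma inv_all:
  assumes a: "a \<in> path_image g" and t: "0 \<le> t" "t \<le> 1" and c0: "c 0 = a"
    and cd: "\<forall>s\<in>{0..t}. (c has_vector_derivative F s (c s)) (at s within {0..t})"
    and good: "\<forall>s\<in>{0..t}. c s \<in> U \<and> fst (c s) \<noteq> 0 \<and> snd (c s) \<noteq> 0"
    and s: "s \<in> {0..t}"
  shows "aH (c s) = cmod (\<rho> s) \<and> cmod (fst (c s)) \<le> cmod (fst a) \<and> cmod (snd (c s)) \<le> cmod (snd a)"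
proof -
  have s01: "0 \<le> s" "s \<le> 1" using s t by auto
  have cd': "\<forall>u\<in>{0..s}. (c has_vector_derivative F u (c u)) (at u within {0..s})"
    using cd s by (auto intro: has_vector_derivative_within_subset[of _ _ _ "{0..t}"])
  have good': "\<forall>u\<in>{0..s}. c u \<in> U \<and> fst (c u) \<noteq> 0 \<and> snd (c u) \<noteq> 0" using good s by auto
  show ?thesis by (rule inv_end[OF a s01 c0 cd' good'])
qed

end

context setting begin

lemma mm_ex: "\<exists>m>0. \<forall>t\<in>{0..1}. m \<le> cmod (\<rho> t)"
proof -
  have "\<exists>t0\<in>{0..1::real}. \<forall>t\<in>{0..1}. cmod (\<rho> t0) \<le> cmod (\<rho> t)"
    by (rule continuous_attains_inf[OF compact_Icc]) (auto intro!: continuous_intros rho_cont)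
  then obtain t0 where t0: "t0 \<in> {0..1}" "\<forall>t\<in>{0..1}. cmod (\<rho> t0) \<le> cmod (\<rho> t)" by blast
  have "cmod (\<rho> t0) > 0" using rnz t0(1) by auto
  thus ?thesis using t0 by blast
qed

definition "mm = (SOME m. m > 0 \<and> (\<forall>t\<in>{0..1}. m \<le> cmod (\<rho> t)))"

lemma mm: "mm > 0" "t \<in> {0..1} \<Longrightarrow> mm \<le> cmod (\<rho> t)"
  using someI_ex[OF mm_ex] unfolding mm_def by auto

definition "Kset = {p \<in> bidisc. mm \<le> aH p \<and> aH p \<le> h0}"

lemma Kset_closed: "closed Kset"
proof -
  have "Kset = bidisc \<inter> {p. mm \<le> aH p} \<inter> {p. aH p \<le> h0}" by (auto simp: Kset_def)
  moreover have "closed (bidisc \<inter> {p. mm \<le> aH p} \<inter> {p. aH p \<le> h0})"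
    by (intro closed_Int bidisc_closed closed_Collect_le continuous_intros aH_cont)
  ultimately show ?thesis by simp
qed

lemma Kset_compact: "compact Kset"
proof -
  have "Kset \<subseteq> bidisc" by (auto simp: Kset_def)
  hence "bounded Kset" using bounded_subset bidisc_bounded by blast
  thus ?thesis using Kset_closed compact_eq_bounded_closed by blast
qed

lemma Kset_U: "Kset \<subseteq> U" using h0 by (auto simp: Kset_def Us_def)

lemma Kset_nz: "p \<in> Kset \<Longrightarrow> fst p \<noteq> 0 \<and> snd p \<noteq> 0"
proof -
  assume "p \<in> Kset"
  hence "aH p > 0" using mm(1) by (auto simp: Kset_def)
  thus ?thesis by (rule aH_pos_nz)
qed

definition "Kx a = {p \<in> Kset. (cmod (fst a) = 1 \<longrightarrow> fst p = fst a) \<and> (cmod (snd a) = 1 \<longrightarrow> snd p = snd a)}"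

lemma Kx_closed: "closed (Kx a)"
proof -
  have c1: "closed {p::complex\<times>complex. cmod (fst a) = 1 \<longrightarrow> fst p = fst a}"
    by (cases "cmod (fst a) = 1") (auto intro!: closed_Collect_eq continuous_on_fst continuous_on_snd continuous_on_id continuous_on_const)
  have c2: "closed {p::complex\<times>complex. cmod (snd a) = 1 \<longrightarrow> snd p = snd a}"
    by (cases "cmod (snd a) = 1") (auto intro!: closed_Collect_eq continuous_on_fst continuous_on_snd continuous_on_id continuous_on_const)
  have "Kx a = Kset \<inter> {p. cmod (fst a) = 1 \<longrightarrow> fst p = fst a} \<inter> {p. cmod (snd a) = 1 \<longrightarrow> snd p = snd a}"
    by (auto simp: Kx_def)
  thus ?thesis using Kset_closed c1 c2 by (simp add: closed_Int)
qed

definition "GS a p \<longleftrightarrow> p \<in> U \<and> fst p \<noteq> 0 \<and> snd p \<noteq> 0 \<and>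
   (cmod (fst a) = 1 \<longrightarrow> fst p = fst a) \<and> (cmod (snd a) = 1 \<longrightarrow> snd p = snd a)"

lemma Kx_GS: "p \<in> Kx a \<Longrightarrow> GS a p"
  using Kset_U Kset_nz by (auto simp: Kx_def GS_def)

lemma F_lipC:
  assumes "compact C" "C \<subseteq> W"
  shows "\<exists>L\<ge>0. \<forall>S. convex S \<longrightarrow> S \<subseteq> C \<longrightarrow>
     (\<forall>t\<in>{0..1}. \<forall>p\<in>S. \<forall>q\<in>S. norm (F t p - F t q) \<le> L * norm (p - q))"
proof -
  obtain B1 where B1: "B1 \<ge> 0" "\<forall>S. convex S \<longrightarrow> S \<subseteq> C \<longrightarrow>
           (\<forall>p\<in>S. \<forall>q\<in>S. norm (v1 p - v1 q) \<le> B1 * norm (p - q))"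
    using Cinf_lip[OF s1 assms] by blast
  obtain B2 where B2: "B2 \<ge> 0" "\<forall>S. convex S \<longrightarrow> S \<subseteq> C \<longrightarrow>
           (\<forall>p\<in>S. \<forall>q\<in>S. norm (vI p - vI q) \<le> B2 * norm (p - q))"
    using Cinf_lip[OF sI assms] by blast
  obtain A where A: "A \<ge> 0" "\<forall>t\<in>{0..1}. \<bar>al t\<bar> \<le> A \<and> \<bar>be t\<bar> \<le> A" using AB_bound by blast
  show ?thesis
  proof (intro exI[of _ "A * (B1 + B2)"] conjI allI impI ballI)
    show "0 \<le> A * (B1 + B2)" using A B1 B2 by simp
    fix S and t :: real and p q assume S: "convex S" "S \<subseteq> C" and t: "t \<in> {0..1}" and pq: "p \<in> S" "q \<in> S"
    have "F t p - F t q = al t *\<^sub>R (v1 p - v1 q) + be t *\<^sub>R (vI p - vI q)"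
      by (simp add: F_eq algebra_simps)
    hence "norm (F t p - F t q) \<le> \<bar>al t\<bar> * norm (v1 p - v1 q) + \<bar>be t\<bar> * norm (vI p - vI q)"
      by (metis norm_scaleR norm_triangle_ineq)
    also have "\<dots> \<le> A * (B1 * norm (p - q)) + A * (B2 * norm (p - q))"
      using A t B1 B2 S pq by (intro add_mono mult_mono) auto
    finally show "norm (F t p - F t q) \<le> A * (B1 + B2) * norm (p - q)" by (simp add: algebra_simps)
  qed
qed

lemma F_bndC:
  assumes "compact C" "C \<subseteq> W"
  shows "\<exists>M\<ge>0. \<forall>t\<in>{0..1}. \<forall>p\<in>C. norm (F t p) \<le> M"
proof -
  obtain M1 where M1: "M1 \<ge> 0" "\<forall>p\<in>C. norm (v1 p) \<le> M1" using Cinf_bound[OF s1 assms] by blast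
  obtain M2 where M2: "M2 \<ge> 0" "\<forall>p\<in>C. norm (vI p) \<le> M2" using Cinf_bound[OF sI assms] by blast
  obtain A where A: "A \<ge> 0" "\<forall>t\<in>{0..1}. \<bar>al t\<bar> \<le> A \<and> \<bar>be t\<bar> \<le> A" using AB_bound by blast
  show ?thesis
  proof (intro exI[of _ "A * (M1 + M2)"] conjI ballI)
    show "0 \<le> A * (M1 + M2)" using A M1 M2 by simp
    fix p and t :: real assume t: "t \<in> {0..1}" and p: "p \<in> C"
    have "norm (F t p) \<le> \<bar>al t\<bar> * norm (v1 p) + \<bar>be t\<bar> * norm (vI p)"
      unfolding F_eq by (metis norm_scaleR norm_triangle_ineq)
    also have "\<dots> \<le> A * M1 + A * M2" using A t M1 M2 p by (intro add_mono mult_mono) auto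
    finally show "norm (F t p) \<le> A * (M1 + M2)" by (simp add: algebra_simps)
  qed
qed

end

context setting begin

lemma cd_cont:
  assumes cd: "\<forall>t\<in>{0..T}. (c has_vector_derivative F t (c t)) (at t within {0..T})"
  shows "continuous_on {0..T} c" and "t \<in> {0..T} \<Longrightarrow> continuous (at t within {0..T}) c"
proof -
  show ct: "t \<in> {0..T} \<Longrightarrow> continuous (at t within {0..T}) c" for t
    using cd has_vector_derivative_continuous by blast
  show "continuous_on {0..T} c" using ct by (simp add: continuous_on_eq_continuous_within)
qed

lemma ext_int:
  assumes a: "a \<in> path_image g" and tau: "0 \<le> \<tau>" "\<tau> < T" "T \<le> 1"
    and cd: "\<forall>t\<in>{0..T}. (c has_vector_derivative F t (c t)) (at t within {0..T})"
    and pre: "c \<tau> \<in> Kx a" and lt: "cmod (fst (c \<tau>)) < 1" "cmod (snd (c \<tau>)) < 1"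
  shows "\<exists>\<eta>>0. \<tau> + \<eta> \<le> T \<and> (\<forall>s\<in>{\<tau>..\<tau>+\<eta>}. GS a (c s))"
proof -
  have ctau: "continuous (at \<tau> within {0..T}) c" using cd_cont(2)[OF cd] tau by auto
  have K: "c \<tau> \<in> Kset" using pre by (simp add: Kx_def)
  have "c \<tau> \<in> Oin" using K Kset_nz[OF K] lt h0 by (auto simp: Oin_def Kset_def)
  then obtain d where d: "d > 0" "\<forall>s\<in>{0..T}. \<bar>s - \<tau>\<bar> < d \<longrightarrow> c s \<in> Oin"
    using cont_open_nbhd[OF ctau Oin_open] by blast
  define \<eta> where "\<eta> = min (d/2) (T - \<tau>)"
  have eta: "\<eta> > 0" "\<tau> + \<eta> \<le> T" using d tau by (auto simp: \<eta>_def)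
  show ?thesis
  proof (intro exI[of _ \<eta>] conjI ballI eta)
    fix s assume s: "s \<in> {\<tau>..\<tau>+\<eta>}"
    hence "s \<in> {0..T}" "\<bar>s - \<tau>\<bar> < d" using tau eta d by (auto simp: \<eta>_def)
    hence O: "c s \<in> Oin" using d by blast
    have nx: "cmod (fst a) \<noteq> 1" using pre lt by (auto simp: Kx_def)
    have ny: "cmod (snd a) \<noteq> 1" using pre lt by (auto simp: Kx_def)
    show "GS a (c s)" using O Oin_U nx ny by (auto simp: GS_def Oin_def)
  qed
qed

lemma aH_x1: "cmod (fst p) = 1 \<Longrightarrow> aH p = cmod (snd p) powr (1/l2)"
  by (simp add: absH_def)
lemma aH_y1: "cmod (snd p) = 1 \<Longrightarrow> aH p = cmod (fst p) powr (1/l1)"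
  by (simp add: absH_def)

lemma powr_lt1:
  fixes x l :: real
  assumes "0 \<le> x" "x powr (1/l) < 1" "l > 0" shows "x < 1"
proof (rule ccontr)
  assume "\<not> x < 1"
  hence "1 \<le> x powr (1/l)" using assms ge_one_powr_ge_zero[of x "1/l"] by auto
  thus False using assms by simp
qed

lemma ext_x:
  assumes a: "a \<in> path_image g" and tau: "0 \<le> \<tau>" "\<tau> < T" "T \<le> 1"
    and cW: "\<forall>t\<in>{0..T}. c t \<in> W"
    and cd: "\<forall>t\<in>{0..T}. (c has_vector_derivative F t (c t)) (at t within {0..T})"
    and pre: "c \<tau> \<in> Kx a" and mon: "cmod (fst (c \<tau>)) \<le> cmod (fst a)"
    and x1: "cmod (fst (c \<tau>)) = 1"
  shows "\<exists>\<eta>>0. \<tau> + \<eta> \<le> T \<and> (\<forall>s\<in>{\<tau>..\<tau>+\<eta>}. GS a (c s))"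
proof -
  have ctau: "continuous (at \<tau> within {0..T}) c" using cd_cont(2)[OF cd] tau by auto
  have ccont: "continuous_on {0..T} c" using cd_cont(1)[OF cd] .
  have K: "c \<tau> \<in> Kset" using pre by (simp add: Kx_def)
  have ab: "cmod (fst a) \<le> 1" using a_props(1)[OF a] by (simp add: bidisc_def)
  have xa1: "cmod (fst a) = 1" using mon x1 ab by simp
  have xa: "fst (c \<tau>) = fst a" using pre xa1 by (simp add: Kx_def)
  have "aH (c \<tau>) \<le> h0" using K by (simp add: Kset_def)
  hence ypow: "cmod (snd (c \<tau>)) powr (1/l2) < h" using aH_x1[OF x1] h0 by simp
  hence y1: "cmod (snd (c \<tau>)) < 1" using powr_lt1[of "cmod (snd (c \<tau>))" l2] h l2 by simp
  have ny: "cmod (snd a) \<noteq> 1"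
  proof
    assume "cmod (snd a) = 1"
    hence "snd (c \<tau>) = snd a" using pre by (simp add: Kx_def)
    thus False using y1 \<open>cmod (snd a) = 1\<close> by simp
  qed
  define O3 where "O3 = {p::complex\<times>complex. snd p \<noteq> 0 \<and> cmod (snd p) < 1 \<and> cmod (snd p) powr (1/l2) < h}"
  have oO3: "open O3" unfolding O3_def using l2
    by (intro open_Collect_conj open_Collect_neq open_Collect_less continuous_intros continuous_on_powr') auto
  have cO3: "c \<tau> \<in> O3" using Kset_nz[OF K] y1 ypow by (simp add: O3_def)
  have "c \<tau> \<in> W" using cW tau by auto
  then obtain e where e: "e > 0" "cball (c \<tau>) e \<subseteq> W" using oW open_contains_cball by blast
  obtain L where L: "L \<ge> 0" "\<forall>S. convex S \<longrightarrow> S \<subseteq> cball (c \<tau>) e \<longrightarrow>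
     (\<forall>t\<in>{0..1}. \<forall>p\<in>S. \<forall>q\<in>S. norm (F t p - F t q) \<le> L * norm (p - q))"
    using F_lipC[OF compact_cball e(2)] by blast
  have lip: "norm (F t p - F t q) \<le> L * norm (p - q)"
    if "t \<in> {0..1}" "p \<in> cball (c \<tau>) e" "q \<in> cball (c \<tau>) e" for t p q
    using L(2) convex_cball that by blast
  have "c \<tau> \<in> ball (c \<tau>) e \<inter> O3" using cO3 e by simp
  then obtain d where d: "d > 0" "\<forall>s\<in>{0..T}. \<bar>s - \<tau>\<bar> < d \<longrightarrow> c s \<in> ball (c \<tau>) e \<inter> O3"
    using cont_open_nbhd[OF ctau open_Int[OF open_ball oO3]] by blast
  define \<eta> where "\<eta> = min (d/2) (min (T - \<tau>) (1 / (2 * (L + 1))))"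
  have eta: "\<eta> > 0" "\<tau> + \<eta> \<le> T" using d tau L by (auto simp: \<eta>_def)
  have etaL: "L * \<eta> \<le> 1/2"
  proof -
    have "L * \<eta> \<le> L * (1 / (2 * (L + 1)))" using L by (intro mult_left_mono) (auto simp: \<eta>_def)
    also have "\<dots> \<le> 1/2" using L by (simp add: field_simps)
    finally show ?thesis .
  qed
  have sT: "s \<in> {0..T}" if "s \<in> {\<tau>..\<tau>+\<eta>}" for s using that tau eta by auto
  have cs: "c s \<in> ball (c \<tau>) e \<inter> O3" if "s \<in> {\<tau>..\<tau>+\<eta>}" for s
    using d that sT[OF that] eta by (auto simp: \<eta>_def)
  define q where "q s = (fst a, snd (c s))" for s
  have qU: "q s \<in> U" and qb: "q s \<in> cball (c \<tau>) e" and qF: "fst (F s (q s)) = 0"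
    if "s \<in> {\<tau>..\<tau>+\<eta>}" for s
  proof -
    have O: "c s \<in> O3" "c s \<in> ball (c \<tau>) e" using cs[OF that] by auto
    show qU: "q s \<in> U" using O(1) xa1 aH_x1[of "q s"]
      by (simp add: q_def O3_def Us_def bidisc_def)
    have "c \<tau> - q s = (0, snd (c \<tau>) - snd (c s))" by (simp add: q_def xa prod_eq_iff)
    hence "dist (c \<tau>) (q s) = norm (snd (c \<tau>) - snd (c s))"
      by (simp add: dist_norm norm_Pair)
    also have "\<dots> \<le> norm (c \<tau> - c s)" using norm_snd_le[of "snd (c \<tau> - c s)" "fst (c \<tau> - c s)"] by (metis prod.collapse snd_diff)
    also have "\<dots> < e" using O(2) by (simp add: dist_norm)
    finally show "q s \<in> cball (c \<tau>) e" by simp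
    have "fst (v1 (q s)) = 0 \<and> fst (vI (q s)) = 0" by (rule eps_x[OF qU]) (simp add: q_def xa1)
    thus "fst (F s (q s)) = 0" by (simp add: fstF)
  qed
  define \<phi> where "\<phi> s = fst (c s) - fst a" for s
  have "continuous_on {\<tau>..\<tau>+\<eta>} (\<lambda>s. norm (\<phi> s))"
    unfolding \<phi>_def using sT
    by (intro continuous_intros continuous_on_subset[OF ccont]) auto
  then obtain s' where s': "s' \<in> {\<tau>..\<tau>+\<eta>}" "\<forall>s\<in>{\<tau>..\<tau>+\<eta>}. norm (\<phi> s) \<le> norm (\<phi> s')"
    using continuous_attains_sup[OF compact_Icc, of "\<tau>" "\<tau>+\<eta>"] eta by force
  have "norm (fst (c s') - fst (c \<tau>)) \<le> (L * norm (\<phi> s')) * (s' - \<tau>)"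
  proof (rule vec_mvt)
    show "\<tau> \<le> s'" using s' by auto
    fix \<sigma> assume \<sigma>: "\<sigma> \<in> {\<tau>..s'}"
    hence \<sigma>': "\<sigma> \<in> {\<tau>..\<tau>+\<eta>}" using s' by auto
    have "(c has_vector_derivative F \<sigma> (c \<sigma>)) (at \<sigma> within {0..T})"
      using cd sT[OF \<sigma>'] by blast
    moreover have "{\<tau>..s'} \<subseteq> {0..T}" using tau sT[OF s'(1)] by auto
    ultimately have "(c has_vector_derivative F \<sigma> (c \<sigma>)) (at \<sigma> within {\<tau>..s'})"
      by (rule has_vector_derivative_within_subset)
    thus "((\<lambda>s. fst (c s)) has_vector_derivative fst (F \<sigma> (c \<sigma>))) (at \<sigma> within {\<tau>..s'})"
      by (rule bounded_linear.has_vector_derivative[OF bounded_linear_fst])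
    have "norm (fst (F \<sigma> (c \<sigma>))) = norm (fst (F \<sigma> (c \<sigma>) - F \<sigma> (q \<sigma>)))" using qF[OF \<sigma>'] by simp
    also have "\<dots> \<le> norm (F \<sigma> (c \<sigma>) - F \<sigma> (q \<sigma>))"
      using norm_fst_le[of "fst (F \<sigma> (c \<sigma>) - F \<sigma> (q \<sigma>))" "snd (F \<sigma> (c \<sigma>) - F \<sigma> (q \<sigma>))"] by (metis prod.collapse)
    also have "\<dots> \<le> L * norm (c \<sigma> - q \<sigma>)"
      using cs[OF \<sigma>'] qb[OF \<sigma>'] sT[OF \<sigma>'] tau by (intro lip) auto
    also have "norm (c \<sigma> - q \<sigma>) = norm (\<phi> \<sigma>)"
    proof -
      have "c \<sigma> - q \<sigma> = (\<phi> \<sigma>, 0)" by (simp add: q_def \<phi>_def prod_eq_iff)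
      thus ?thesis by (simp add: norm_Pair)
    qed
    also have "L * norm (\<phi> \<sigma>) \<le> L * norm (\<phi> s')" using s'(2) \<sigma>' L by (intro mult_left_mono) auto
    finally show "norm (fst (F \<sigma> (c \<sigma>))) \<le> L * norm (\<phi> s')" .
  qed
  also have "\<dots> \<le> (L * norm (\<phi> s')) * \<eta>" using s' L by (intro mult_left_mono) auto
  also have "\<dots> = (L * \<eta>) * norm (\<phi> s')" by simp
  also have "\<dots> \<le> (1/2) * norm (\<phi> s')" using etaL by (intro mult_right_mono) auto
  finally have "norm (\<phi> s') \<le> (1/2) * norm (\<phi> s')" by (simp add: \<phi>_def xa)
  hence z: "norm (\<phi> s') = 0" by simp
  show ?thesis
  proof (intro exI[of _ \<eta>] conjI ballI eta)
    fix s assume s: "s \<in> {\<tau>..\<tau>+\<eta>}"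
    have "\<phi> s = 0" using s'(2) s z by force
    hence fx: "fst (c s) = fst a" by (simp add: \<phi>_def)
    hence cq: "c s = q s" unfolding q_def by (simp add: prod_eq_iff)
    have cU: "c s \<in> U" using qU[OF s] cq by simp
    have "snd (c s) \<noteq> 0" using cs[OF s] by (simp add: O3_def)
    moreover have "fst (c s) \<noteq> 0" using fx xa1 by auto
    ultimately show "GS a (c s)" using cU fx ny by (simp add: GS_def)
  qed
qed

lemma ext_y:
  assumes a: "a \<in> path_image g" and tau: "0 \<le> \<tau>" "\<tau> < T" "T \<le> 1"
    and cW: "\<forall>t\<in>{0..T}. c t \<in> W"
    and cd: "\<forall>t\<in>{0..T}. (c has_vector_derivative F t (c t)) (at t within {0..T})"
    and pre: "c \<tau> \<in> Kx a" and mon: "cmod (snd (c \<tau>)) \<le> cmod (snd a)"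
    and y1c: "cmod (snd (c \<tau>)) = 1"
  shows "\<exists>\<eta>>0. \<tau> + \<eta> \<le> T \<and> (\<forall>s\<in>{\<tau>..\<tau>+\<eta>}. GS a (c s))"
proof -
  have ctau: "continuous (at \<tau> within {0..T}) c" using cd_cont(2)[OF cd] tau by auto
  have ccont: "continuous_on {0..T} c" using cd_cont(1)[OF cd] .
  have K: "c \<tau> \<in> Kset" using pre by (simp add: Kx_def)
  have ab: "cmod (snd a) \<le> 1" using a_props(1)[OF a] by (simp add: bidisc_def)
  have xa1: "cmod (snd a) = 1" using mon y1c ab by simp
  have xa: "snd (c \<tau>) = snd a" using pre xa1 by (simp add: Kx_def)
  have "aH (c \<tau>) \<le> h0" using K by (simp add: Kset_def)
  hence ypow: "cmod (fst (c \<tau>)) powr (1/l1) < h" using aH_y1[OF y1c] h0 by simp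
  hence y1: "cmod (fst (c \<tau>)) < 1" using powr_lt1[of "cmod (fst (c \<tau>))" l1] h l1 by simp
  have ny: "cmod (fst a) \<noteq> 1"
  proof
    assume "cmod (fst a) = 1"
    hence "fst (c \<tau>) = fst a" using pre by (simp add: Kx_def)
    thus False using y1 \<open>cmod (fst a) = 1\<close> by simp
  qed
  define O3 where "O3 = {p::complex\<times>complex. fst p \<noteq> 0 \<and> cmod (fst p) < 1 \<and> cmod (fst p) powr (1/l1) < h}"
  have oO3: "open O3" unfolding O3_def using l1
    by (intro open_Collect_conj open_Collect_neq open_Collect_less continuous_intros continuous_on_powr') auto
  have cO3: "c \<tau> \<in> O3" using Kset_nz[OF K] y1 ypow by (simp add: O3_def)
  have "c \<tau> \<in> W" using cW tau by auto
  then obtain e where e: "e > 0" "cball (c \<tau>) e \<subseteq> W" using oW open_contains_cball by blast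
  obtain L where L: "L \<ge> 0" "\<forall>S. convex S \<longrightarrow> S \<subseteq> cball (c \<tau>) e \<longrightarrow>
     (\<forall>t\<in>{0..1}. \<forall>p\<in>S. \<forall>q\<in>S. norm (F t p - F t q) \<le> L * norm (p - q))"
    using F_lipC[OF compact_cball e(2)] by blast
  have lip: "norm (F t p - F t q) \<le> L * norm (p - q)"
    if "t \<in> {0..1}" "p \<in> cball (c \<tau>) e" "q \<in> cball (c \<tau>) e" for t p q
    using L(2) convex_cball that by blast
  have "c \<tau> \<in> ball (c \<tau>) e \<inter> O3" using cO3 e by simp
  then obtain d where d: "d > 0" "\<forall>s\<in>{0..T}. \<bar>s - \<tau>\<bar> < d \<longrightarrow> c s \<in> ball (c \<tau>) e \<inter> O3"
    using cont_open_nbhd[OF ctau open_Int[OF open_ball oO3]] by blast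
  define \<eta> where "\<eta> = min (d/2) (min (T - \<tau>) (1 / (2 * (L + 1))))"
  have eta: "\<eta> > 0" "\<tau> + \<eta> \<le> T" using d tau L by (auto simp: \<eta>_def)
  have etaL: "L * \<eta> \<le> 1/2"
  proof -
    have "L * \<eta> \<le> L * (1 / (2 * (L + 1)))" using L by (intro mult_left_mono) (auto simp: \<eta>_def)
    also have "\<dots> \<le> 1/2" using L by (simp add: field_simps)
    finally show ?thesis .
  qed
  have sT: "s \<in> {0..T}" if "s \<in> {\<tau>..\<tau>+\<eta>}" for s using that tau eta by auto
  have cs: "c s \<in> ball (c \<tau>) e \<inter> O3" if "s \<in> {\<tau>..\<tau>+\<eta>}" for s
    using d that sT[OF that] eta by (auto simp: \<eta>_def)
  define q where "q s = (fst (c s), snd a)" for s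
  have qU: "q s \<in> U" and qb: "q s \<in> cball (c \<tau>) e" and qF: "snd (F s (q s)) = 0"
    if "s \<in> {\<tau>..\<tau>+\<eta>}" for s
  proof -
    have O: "c s \<in> O3" "c s \<in> ball (c \<tau>) e" using cs[OF that] by auto
    show qU: "q s \<in> U" using O(1) xa1 aH_y1[of "q s"]
      by (simp add: q_def O3_def Us_def bidisc_def)
    have "c \<tau> - q s = (fst (c \<tau>) - fst (c s), 0)" by (simp add: q_def xa prod_eq_iff)
    hence "dist (c \<tau>) (q s) = norm (fst (c \<tau>) - fst (c s))"
      by (simp add: dist_norm norm_Pair)
    also have "\<dots> \<le> norm (c \<tau> - c s)" using norm_fst_le[of "fst (c \<tau> - c s)" "snd (c \<tau> - c s)"] by (metis prod.collapse fst_diff)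
    also have "\<dots> < e" using O(2) by (simp add: dist_norm)
    finally show "q s \<in> cball (c \<tau>) e" by simp
    have "snd (v1 (q s)) = 0 \<and> snd (vI (q s)) = 0" by (rule eps_y[OF qU]) (simp add: q_def xa1)
    thus "snd (F s (q s)) = 0" by (simp add: sndF)
  qed
  define \<phi> where "\<phi> s = snd (c s) - snd a" for s
  have "continuous_on {\<tau>..\<tau>+\<eta>} (\<lambda>s. norm (\<phi> s))"
    unfolding \<phi>_def using sT
    by (intro continuous_intros continuous_on_subset[OF ccont]) auto
  then obtain s' where s': "s' \<in> {\<tau>..\<tau>+\<eta>}" "\<forall>s\<in>{\<tau>..\<tau>+\<eta>}. norm (\<phi> s) \<le> norm (\<phi> s')"
    using continuous_attains_sup[OF compact_Icc, of "\<tau>" "\<tau>+\<eta>"] eta by force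
  have "norm (snd (c s') - snd (c \<tau>)) \<le> (L * norm (\<phi> s')) * (s' - \<tau>)"
  proof (rule vec_mvt)
    show "\<tau> \<le> s'" using s' by auto
    fix \<sigma> assume \<sigma>: "\<sigma> \<in> {\<tau>..s'}"
    hence \<sigma>': "\<sigma> \<in> {\<tau>..\<tau>+\<eta>}" using s' by auto
    have "(c has_vector_derivative F \<sigma> (c \<sigma>)) (at \<sigma> within {0..T})"
      using cd sT[OF \<sigma>'] by blast
    moreover have "{\<tau>..s'} \<subseteq> {0..T}" using tau sT[OF s'(1)] by auto
    ultimately have "(c has_vector_derivative F \<sigma> (c \<sigma>)) (at \<sigma> within {\<tau>..s'})"
      by (rule has_vector_derivative_within_subset)
    thus "((\<lambda>s. snd (c s)) has_vector_derivative snd (F \<sigma> (c \<sigma>))) (at \<sigma> within {\<tau>..s'})"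
      by (rule bounded_linear.has_vector_derivative[OF bounded_linear_snd])
    have "norm (snd (F \<sigma> (c \<sigma>))) = norm (snd (F \<sigma> (c \<sigma>) - F \<sigma> (q \<sigma>)))" using qF[OF \<sigma>'] by simp
    also have "\<dots> \<le> norm (F \<sigma> (c \<sigma>) - F \<sigma> (q \<sigma>))"
      using norm_snd_le[of "snd (F \<sigma> (c \<sigma>) - F \<sigma> (q \<sigma>))" "fst (F \<sigma> (c \<sigma>) - F \<sigma> (q \<sigma>))"] by (metis prod.collapse)
    also have "\<dots> \<le> L * norm (c \<sigma> - q \<sigma>)"
      using cs[OF \<sigma>'] qb[OF \<sigma>'] sT[OF \<sigma>'] tau by (intro lip) auto
    also have "norm (c \<sigma> - q \<sigma>) = norm (\<phi> \<sigma>)"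
    proof -
      have "c \<sigma> - q \<sigma> = (0, \<phi> \<sigma>)" by (simp add: q_def \<phi>_def prod_eq_iff)
      thus ?thesis by (simp add: norm_Pair)
    qed
    also have "L * norm (\<phi> \<sigma>) \<le> L * norm (\<phi> s')" using s'(2) \<sigma>' L by (intro mult_left_mono) auto
    finally show "norm (snd (F \<sigma> (c \<sigma>))) \<le> L * norm (\<phi> s')" .
  qed
  also have "\<dots> \<le> (L * norm (\<phi> s')) * \<eta>" using s' L by (intro mult_left_mono) auto
  also have "\<dots> = (L * \<eta>) * norm (\<phi> s')" by simp
  also have "\<dots> \<le> (1/2) * norm (\<phi> s')" using etaL by (intro mult_right_mono) auto
  finally have "norm (\<phi> s') \<le> (1/2) * norm (\<phi> s')" by (simp add: \<phi>_def xa)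
  hence z: "norm (\<phi> s') = 0" by simp
  show ?thesis
  proof (intro exI[of _ \<eta>] conjI ballI eta)
    fix s assume s: "s \<in> {\<tau>..\<tau>+\<eta>}"
    have "\<phi> s = 0" using s'(2) s z by force
    hence fx: "snd (c s) = snd a" by (simp add: \<phi>_def)
    hence cq: "c s = q s" unfolding q_def by (simp add: prod_eq_iff)
    have cU: "c s \<in> U" using qU[OF s] cq by simp
    have "fst (c s) \<noteq> 0" using cs[OF s] by (simp add: O3_def)
    moreover have "snd (c s) \<noteq> 0" using fx xa1 by auto
    ultimately show "GS a (c s)" using cU fx ny by (simp add: GS_def)
  qed
qed

end

context setting begin

lemma a_Kx: "a \<in> path_image g \<Longrightarrow> a \<in> Kx a"
  using a_props[of a] mm(2)[of 0] r0 h0 by (auto simp: Kx_def Kset_def)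

lemma apriori:
  assumes a: "a \<in> path_image g" and T: "0 \<le> T" "T \<le> 1" and c0: "c 0 = a"
    and cW: "\<forall>t\<in>{0..T}. c t \<in> W"
    and cd: "\<forall>t\<in>{0..T}. (c has_vector_derivative F t (c t)) (at t within {0..T})"
  shows "\<forall>t\<in>{0..T}. c t \<in> Kx a"
proof -
  define S where "S = {t\<in>{0..T}. \<forall>s\<in>{0..t}. GS a (c s)}"
  have Kx_of: "c s \<in> Kx a" if t: "t \<in> S" and s: "s \<in> {0..t}" for t s
  proof -
    have t01: "0 \<le> t" "t \<le> 1" using t T by (auto simp: S_def)
    have cd': "\<forall>u\<in>{0..t}. (c has_vector_derivative F u (c u)) (at u within {0..t})"
    proof
      fix u assume u: "u \<in> {0..t}"
      have "(c has_vector_derivative F u (c u)) (at u within {0..T})" using cd u t by (auto simp: S_def)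
      moreover have "{0..t} \<subseteq> {0..T}" using t by (auto simp: S_def)
      ultimately show "(c has_vector_derivative F u (c u)) (at u within {0..t})"
        by (rule has_vector_derivative_within_subset)
    qed
    have good: "\<forall>u\<in>{0..t}. c u \<in> U \<and> fst (c u) \<noteq> 0 \<and> snd (c u) \<noteq> 0"
      using t by (auto simp: S_def GS_def)
    have iv: "aH (c s) = cmod (\<rho> s)" using inv_all[OF a t01 c0 cd' good s] by blast
    have s1: "s \<in> {0..1}" using s t01 by auto
    have "c s \<in> bidisc" using good s by (auto simp: Us_def)
    moreover have "mm \<le> aH (c s)" "aH (c s) \<le> h0" using iv mm(2)[OF s1] rnz s1 by auto
    moreover have "GS a (c s)" using t s by (auto simp: S_def)
    ultimately show ?thesis by (auto simp: Kx_def Kset_def GS_def)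
  qed
  have S0: "0 \<in> S" using Kx_GS[OF a_Kx[OF a]] c0 T by (auto simp: S_def)
  have bdd: "bdd_above S" by (auto simp: S_def bdd_above_def)
  define \<tau> where "\<tau> = Sup S"
  have tau0: "0 \<le> \<tau>" unfolding \<tau>_def using S0 bdd by (rule cSup_upper)
  have tauT: "\<tau> \<le> T" unfolding \<tau>_def using S0 by (intro cSup_least) (auto simp: S_def)
  have below: "c s \<in> Kx a" if "s \<in> {0..<\<tau>}" for s
  proof -
    have "s < Sup S" using that by (simp add: \<tau>_def)
    then obtain t where "t \<in> S" "s < t" using less_cSup_iff[OF _ bdd] S0 by blast
    thus ?thesis using Kx_of that by auto
  qed
  have ccont: "continuous_on {0..T} c" using cd_cont(1)[OF cd] .
  have upto: "\<forall>s\<in>{0..\<tau>}. c s \<in> Kx a"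
  proof (cases "\<tau> = 0")
    case True thus ?thesis using a_Kx[OF a] c0 by auto
  next
    case False
    hence tp: "0 < \<tau>" using tau0 by simp
    have "c ` closure {0..<\<tau>} \<subseteq> Kx a"
    proof (rule image_closure_subset[OF _ Kx_closed])
      show "continuous_on (closure {0..<\<tau>}) c"
        using tp tauT by (auto intro: continuous_on_subset[OF ccont])
      show "c ` {0..<\<tau>} \<subseteq> Kx a" using below by auto
    qed
    thus ?thesis using tp by auto
  qed
  hence tauS: "\<tau> \<in> S" using tau0 tauT Kx_GS by (auto simp: S_def)
  show ?thesis
  proof (cases "\<tau> = T")
    case True thus ?thesis using upto by simp
  next
    case False
    hence tT: "\<tau> < T" using tauT by simp
    have pre: "c \<tau> \<in> Kx a" using upto tau0 by auto
    have mon: "cmod (fst (c \<tau>)) \<le> cmod (fst a)" "cmod (snd (c \<tau>)) \<le> cmod (snd a)"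
      using Kx_of[OF tauS, of \<tau>] tau0
    proof -
      have t01: "0 \<le> \<tau>" "\<tau> \<le> 1" using tau0 tauT T by auto
      have cd': "\<forall>u\<in>{0..\<tau>}. (c has_vector_derivative F u (c u)) (at u within {0..\<tau>})"
      proof
        fix u assume u: "u \<in> {0..\<tau>}"
        have "(c has_vector_derivative F u (c u)) (at u within {0..T})" using cd u tauT by auto
        moreover have "{0..\<tau>} \<subseteq> {0..T}" using tauT by auto
        ultimately show "(c has_vector_derivative F u (c u)) (at u within {0..\<tau>})"
          by (rule has_vector_derivative_within_subset)
      qed
      have good: "\<forall>u\<in>{0..\<tau>}. c u \<in> U \<and> fst (c u) \<noteq> 0 \<and> snd (c u) \<noteq> 0"
        using tauS by (auto simp: S_def GS_def)
      show "cmod (fst (c \<tau>)) \<le> cmod (fst a)" "cmod (snd (c \<tau>)) \<le> cmod (snd a)"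
        using inv_all[OF a t01 c0 cd' good, of \<tau>] tau0 by auto
    qed
    have Kb: "cmod (fst (c \<tau>)) \<le> 1" "cmod (snd (c \<tau>)) \<le> 1"
      using pre by (auto simp: Kx_def Kset_def bidisc_def)
    have "\<exists>\<eta>>0. \<tau> + \<eta> \<le> T \<and> (\<forall>s\<in>{\<tau>..\<tau>+\<eta>}. GS a (c s))"
    proof (cases "cmod (fst (c \<tau>)) = 1")
      case True thus ?thesis using ext_x[OF a tau0 tT T(2) cW cd pre mon(1)] by blast
    next
      case nx: False
      show ?thesis
      proof (cases "cmod (snd (c \<tau>)) = 1")
        case True thus ?thesis using ext_y[OF a tau0 tT T(2) cW cd pre mon(2)] by blast
      next
        case False
        thus ?thesis using ext_int[OF a tau0 tT T(2) cd pre] nx Kb by simp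
      qed
    qed
    then obtain \<eta> where eta: "\<eta> > 0" "\<tau> + \<eta> \<le> T" "\<forall>s\<in>{\<tau>..\<tau>+\<eta>}. GS a (c s)" by blast
    have "\<tau> + \<eta> \<in> S"
    proof -
      have "GS a (c s)" if "s \<in> {0..\<tau>+\<eta>}" for s
      proof (cases "s \<le> \<tau>")
        case True thus ?thesis using upto that Kx_GS by auto
      next
        case False thus ?thesis using eta(3) that by auto
      qed
      thus ?thesis using eta tau0 by (auto simp: S_def)
    qed
    hence "\<tau> + \<eta> \<le> \<tau>" unfolding \<tau>_def using bdd by (rule cSup_upper)
    thus ?thesis using eta by simp
  qed
qed

end

context setting begin

lemma not_limpt_closed: "closed S \<Longrightarrow> t \<notin> S \<Longrightarrow> \<not> t islimpt S"
  using closed_limpt by blast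

lemma exist:
  assumes a: "a \<in> path_image g"
  shows "\<exists>c. is_lifting \<rho> v1 vI W a c"
proof -
  have KW: "Kset \<subseteq> W" using Kset_U UsW by auto
  obtain e where e: "e > 0" "(\<Union>x\<in>Kset. cball x e) \<subseteq> W"
    using compact_subset_open_imp_cball_epsilon_subset[OF Kset_compact oW KW] by blast
  define C where "C = (\<Union>x\<in>Kset. cball x e)"
  have cC: "compact C" unfolding C_def by (rule compact_minkowski_sum_cball[OF Kset_compact])
  have CW: "C \<subseteq> W" using e by (simp add: C_def)
  obtain M where M: "M \<ge> 0" "\<forall>t\<in>{0..1}. \<forall>p\<in>C. norm (F t p) \<le> M" using F_bndC[OF cC CW] by blast
  obtain L where L: "L \<ge> 0" "\<forall>S. convex S \<longrightarrow> S \<subseteq> C \<longrightarrow>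
     (\<forall>t\<in>{0..1}. \<forall>p\<in>S. \<forall>q\<in>S. norm (F t p - F t q) \<le> L * norm (p - q))"
    using F_lipC[OF cC CW] by blast
  define \<delta> where "\<delta> = min (e / (M + 1)) (1 / (2 * (L + 1)))"
  have d0: "\<delta> > 0" using e M L by (simp add: \<delta>_def)
  have v1c: "continuous_on W v1" by (rule Cinf_cont[OF s1])
  have vIc: "continuous_on W vI" by (rule Cinf_cont[OF sI])
  have step: "\<exists>d. d T = p \<and> (\<forall>t\<in>{T..min 1 (T + \<delta>)}. d t \<in> cball p e \<and>
         (d has_vector_derivative F t (d t)) (at t within {T..min 1 (T + \<delta>)}))"
    if p: "p \<in> Kset" and T: "0 \<le> T" "T < 1" for p T
  proof -
    define T' where "T' = min 1 (T + \<delta>)"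
    have TT: "T < T'" "T' \<le> 1" "T' - T \<le> \<delta>" using T d0 by (auto simp: T'_def)
    have sub01: "{T..T'} \<subseteq> {0..1}" using T TT by auto
    have pC: "cball p e \<subseteq> C" using p by (auto simp: C_def)
    have "\<exists>d. d T = p \<and> (\<forall>t\<in>{T..T'}. d t \<in> cball p e \<and>
         (d has_vector_derivative F t (d t)) (at t within {T..T'}))"
    proof (rule picard[where F=F and pa=p and ta=T and tb=T' and r=e and M=M and L=L])
      fix u assume u: "continuous_on {T..T'} u" "u ` {T..T'} \<subseteq> cball p e"
      have "continuous_on {T..T'} (\<lambda>s. al s *\<^sub>R v1 (u s) + be s *\<^sub>R vI (u s))"
        using u pC CW
        by (intro continuous_intros continuous_on_subset[OF al_cont sub01] continuous_on_subset[OF be_cont sub01]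
            continuous_on_compose2[OF v1c u(1)] continuous_on_compose2[OF vIc u(1)]) auto
      thus "continuous_on {T..T'} (\<lambda>s. F s (u s))" by (simp add: F_eq)
    next
      fix t q assume "t \<in> {T..T'}" "q \<in> cball p e"
      thus "norm (F t q) \<le> M" using M sub01 pC by blast
    next
      fix t q q' assume "t \<in> {T..T'}" "q \<in> cball p e" "q' \<in> cball p e"
      thus "norm (F t q - F t q') \<le> L * norm (q - q')" using L(2)[rule_format, OF convex_cball pC] sub01 by blast
    next
      have "(T' - T) * M \<le> \<delta> * M" using TT M by (intro mult_right_mono) auto
      also have "\<dots> \<le> (e / (M + 1)) * M" using M d0 by (intro mult_right_mono) (auto simp: \<delta>_def)
      also have "\<dots> \<le> e" using e M by (simp add: field_simps)
      finally show "(T' - T) * M \<le> e" .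
    next
      have "(T' - T) * L \<le> \<delta> * L" using TT L by (intro mult_right_mono) auto
      also have "\<dots> \<le> (1 / (2 * (L + 1))) * L" using L d0 by (intro mult_right_mono) (auto simp: \<delta>_def)
      also have "\<dots> \<le> 1/2" using L by (simp add: field_simps)
      finally show "(T' - T) * L \<le> 1/2" .
    qed (use TT e M L in auto)
    thus ?thesis by (simp add: T'_def)
  qed
  have ind: "\<exists>c. c 0 = a \<and> (\<forall>t\<in>{0..min 1 (real n * \<delta>)}. c t \<in> W \<and>
       (c has_vector_derivative F t (c t)) (at t within {0..min 1 (real n * \<delta>)}))" for n
  proof (induction n)
    case 0
    have aW: "a \<in> W" using a_props(3)[OF a] UsW by auto
    show ?case
      by (intro exI[of _ "\<lambda>_. a"]) (auto simp: aW intro!: vd_trivial islimpt_finite)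
  next
    case (Suc n)
    then obtain c where c: "c 0 = a" "\<forall>t\<in>{0..min 1 (real n * \<delta>)}. c t \<in> W \<and>
       (c has_vector_derivative F t (c t)) (at t within {0..min 1 (real n * \<delta>)})" by blast
    define T where "T = min 1 (real n * \<delta>)"
    have T0: "0 \<le> T" "T \<le> 1" using d0 by (auto simp: T_def)
    show ?case
    proof (cases "T = 1")
      case True
      hence "min 1 (real (Suc n) * \<delta>) = 1" using d0 by (auto simp: T_def min_def algebra_simps split: if_splits)
      thus ?thesis using c True by (auto simp: T_def)
    next
      case False
      hence T1: "T < 1" using T0 by simp
      have Tn: "T = real n * \<delta>" using T1 by (auto simp: T_def min_def split: if_splits)
      have next_eq: "min 1 (real (Suc n) * \<delta>) = min 1 (T + \<delta>)" by (simp add: Tn algebra_simps)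
      have cW: "\<forall>t\<in>{0..T}. c t \<in> W" and cd: "\<forall>t\<in>{0..T}. (c has_vector_derivative F t (c t)) (at t within {0..T})"
        using c(2) by (auto simp: T_def)
      have "c T \<in> Kx a" using apriori[OF a T0 c(1) cW cd] T0 by auto
      hence cK: "c T \<in> Kset" by (simp add: Kx_def)
      obtain d where d: "d T = c T" "\<forall>t\<in>{T..min 1 (T + \<delta>)}. d t \<in> cball (c T) e \<and>
         (d has_vector_derivative F t (d t)) (at t within {T..min 1 (T + \<delta>)})"
        using step[OF cK T0(1) T1] by blast
      define T' where "T' = min 1 (T + \<delta>)"
      have TT: "T \<le> T'" using T1 d0 by (simp add: T'_def)
      define c' where "c' t = (if t \<le> T then c t else d t)" for t
      have dW: "d t \<in> W" if "t \<in> {T..T'}" for t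
      proof -
        have "d t \<in> cball (c T) e" using d(2) that by (simp add: T'_def)
        moreover have "cball (c T) e \<subseteq> W" using cK e(2) by blast
        ultimately show ?thesis by blast
      qed
      have "c' t \<in> W \<and> (c' has_vector_derivative F t (c' t)) (at t within {0..T'})" if t: "t \<in> {0..T'}" for t
      proof
        show "c' t \<in> W" using t cW dW by (auto simp: c'_def)
        have un: "{0..T'} = {0..T} \<union> {T..T'}" using T0 TT by auto
        have D1: "(c' has_vector_derivative F t (c' t)) (at t within {0..T})"
        proof (cases "t \<le> T")
          case True
          hence "(c has_vector_derivative F t (c' t)) (at t within {0..T})" using cd t by (auto simp: c'_def)
          thus ?thesis by (rule has_vector_derivative_transform[rotated 2]) (use True t in \<open>auto simp: c'_def\<close>)
        next
          case False thus ?thesis by (intro vd_trivial not_limpt_closed) auto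
        qed
        have D2: "(c' has_vector_derivative F t (c' t)) (at t within {T..T'})"
        proof (cases "T \<le> t")
          case True
          have tt: "t \<in> {T..T'}" using True t by auto
          have ct: "c' t = d t" using d(1) True by (auto simp: c'_def)
          have "(d has_vector_derivative F t (c' t)) (at t within {T..T'})" using d(2) tt ct by (auto simp: T'_def)
          thus ?thesis by (rule has_vector_derivative_transform[rotated 2]) (use tt d(1) in \<open>auto simp: c'_def\<close>)
        next
          case False thus ?thesis by (intro vd_trivial not_limpt_closed) auto
        qed
        show "(c' has_vector_derivative F t (c' t)) (at t within {0..T'})"
          unfolding un by (rule vd_Un[OF D1 D2])
      qed
      moreover have "c' 0 = a" using c(1) T0 by (simp add: c'_def)
      ultimately show ?thesis unfolding next_eq T'_def[symmetric] by blast
    qed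
  qed
  obtain n :: nat where n: "1 / \<delta> < real n" using reals_Archimedean2 by blast
  have "1 \<le> real n * \<delta>" using n d0 by (simp add: field_simps)
  hence mn: "min 1 (real n * \<delta>) = 1" by simp
  obtain c where c: "c 0 = a" "\<forall>t\<in>{0..1}. c t \<in> W \<and> (c has_vector_derivative F t (c t)) (at t within {0..1})"
    using ind[of n] unfolding mn by blast
  thus ?thesis unfolding is_lifting_def by blast
qed

lemma main:
  "(\<forall>a\<in>path_image g. (\<exists>c. is_lifting \<rho> v1 vI W a c) \<and>
            (\<forall>c. is_lifting \<rho> v1 vI W a c \<longrightarrow> (\<forall>t\<in>{0..1}. c t \<in> Us l1 l2 h)))
       \<and> ((\<exists>a\<in>path_image g. fst a = 1) \<longrightarrow>
            (\<forall>t\<in>{0..1}. \<exists>a\<in>path_image g. \<forall>c. is_lifting \<rho> v1 vI W a c \<longrightarrow> fst (c t) = 1))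
       \<and> ((\<exists>a\<in>path_image g. snd a = 1) \<longrightarrow>
            (\<forall>t\<in>{0..1}. \<exists>a\<in>path_image g. \<forall>c. is_lifting \<rho> v1 vI W a c \<longrightarrow> snd (c t) = 1))"
proof -
  have K: "c t \<in> Kx a" if "a \<in> path_image g" "is_lifting \<rho> v1 vI W a c" "t \<in> {0..1}" for a c t
    using apriori[of a 1 c] that unfolding is_lifting_def by auto
  show ?thesis
  proof (intro conjI ballI impI allI)
    fix a assume a: "a \<in> path_image g"
    show "\<exists>c. is_lifting \<rho> v1 vI W a c" by (rule exist[OF a])
    fix c and t :: real assume "is_lifting \<rho> v1 vI W a c" "t \<in> {0..1}"
    thus "c t \<in> U" using K[OF a] Kset_U by (auto simp: Kx_def)
  next
    fix t :: real assume ex: "\<exists>a\<in>path_image g. fst a = 1" and t: "t \<in> {0..1}"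
    then obtain a where a: "a \<in> path_image g" "fst a = 1" by blast
    show "\<exists>a\<in>path_image g. \<forall>c. is_lifting \<rho> v1 vI W a c \<longrightarrow> fst (c t) = 1"
      using K[OF a(1) _ t] a by (intro bexI[OF _ a(1)]) (auto simp: Kx_def)
  next
    fix t :: real assume ex: "\<exists>a\<in>path_image g. snd a = 1" and t: "t \<in> {0..1}"
    then obtain a where a: "a \<in> path_image g" "snd a = 1" by blast
    show "\<exists>a\<in>path_image g. \<forall>c. is_lifting \<rho> v1 vI W a c \<longrightarrow> snd (c t) = 1"
      using K[OF a(1) _ t] a by (intro bexI[OF _ a(1)]) (auto simp: Kx_def)
  qed
qed

end

theorem proposition1:
  fixes l1 l2 h h0 :: real
    and v1 vI :: "complex \<times> complex \<Rightarrow> complex \<times> complex"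
    and W :: "(complex \<times> complex) set"
    and g :: "real \<Rightarrow> complex \<times> complex"
    and \<rho> :: "real \<Rightarrow> complex"
    and W\<rho> :: "real set"
  assumes "l1 > 0" and "l2 > 0" and "0 < h" and "h < 1"
    and "open W" and "Us l1 l2 h \<subseteq> W" and "Cinf_on W v1" and "Cinf_on W vI"
    and "\<forall>p\<in>Us l1 l2 h. fst p \<noteq> 0 \<and> snd p \<noteq> 0 \<longrightarrow>
           dlogH l1 l2 p (v1 p) = 1 \<and> dlogH l1 l2 p (vI p) = \<i>"
    and "\<forall>c a b. (\<forall>t\<in>{a..b}. c t \<in> Us l1 l2 h \<and>
                   (c has_vector_derivative v1 (c t)) (at t within {a..b})) \<longrightarrow>
           (\<forall>s\<in>{a..b}. \<forall>t\<in>{a..b}. s \<le> t \<longrightarrow>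
              cmod (fst (c s)) \<le> cmod (fst (c t)) \<and> cmod (snd (c s)) \<le> cmod (snd (c t)))"
    and "\<forall>c a b. (\<forall>t\<in>{a..b}. c t \<in> Us l1 l2 h \<and>
                   (c has_vector_derivative vI (c t)) (at t within {a..b})) \<longrightarrow>
           (\<forall>s\<in>{a..b}. \<forall>t\<in>{a..b}. s \<le> t \<longrightarrow>
              cmod (fst (c t)) \<le> cmod (fst (c s)) \<and> cmod (snd (c t)) \<le> cmod (snd (c s)))"
    and "\<exists>\<epsilon>>0. \<forall>p\<in>Us l1 l2 h. cmod (snd p) > 1 - \<epsilon> \<longrightarrow> snd (v1 p) = 0 \<and> snd (vI p) = 0"
    and "\<exists>\<epsilon>>0. \<forall>p\<in>Us l1 l2 h. cmod (fst p) > 1 - \<epsilon> \<longrightarrow> fst (v1 p) = 0 \<and> fst (vI p) = 0"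
    and "0 < h0" and "h0 < h"
    and "path g" and "path_image g \<subseteq> bidisc \<inter> H_level l1 l2 (of_real h0)"
    and "open W\<rho>" and "{0..1} \<subseteq> W\<rho>" and "Cinf_on W\<rho> \<rho>"
    and "\<rho> 0 = of_real h0"
    and "\<forall>t\<in>{0..1}. \<rho> t \<noteq> 0 \<and> cmod (\<rho> t) \<le> h0"
    and "\<forall>t\<in>{0..1}. \<exists>D<0. ((\<lambda>s. cmod (\<rho> s)) has_real_derivative D) (at t)"
  shows "(\<forall>a\<in>path_image g. (\<exists>c. is_lifting \<rho> v1 vI W a c) \<and>
            (\<forall>c. is_lifting \<rho> v1 vI W a c \<longrightarrow> (\<forall>t\<in>{0..1}. c t \<in> Us l1 l2 h)))
       \<and> ((\<exists>a\<in>path_image g. fst a = 1) \<longrightarrow>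
            (\<forall>t\<in>{0..1}. \<exists>a\<in>path_image g. \<forall>c. is_lifting \<rho> v1 vI W a c \<longrightarrow> fst (c t) = 1))
       \<and> ((\<exists>a\<in>path_image g. snd a = 1) \<longrightarrow>
            (\<forall>t\<in>{0..1}. \<exists>a\<in>path_image g. \<forall>c. is_lifting \<rho> v1 vI W a c \<longrightarrow> snd (c t) = 1))"
proof -
  interpret setting l1 l2 h h0 v1 vI W g \<rho> W\<rho>
    by (rule setting.intro[OF assms])
  show ?thesis by (rule main)
qed

end
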